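(* Let $x_0\in\mathbb{T}^d$, integers $a<0<b$, $\epsilon\in(0,1)$, and assume $$|V(x_0+n\omega)-V(x_0)|\ge\exp(-(\log\lambda)^\epsilon)\quad\text{for all }n\in[a,b]\setminus\{0\}.$$ There exists $\lambda_0(V)=\exp((T_V)^C)$, $C=C(\rho,\epsilon)$, such that for $\lambda\ge\lambda_0$ the following holds. There exist an index $k$ and a choice of $\ell^2$-normalized eigenvectors $\psi_k^{[a,b]}(x,\cdot)$ of $H_{[a,b]}(x)$ with eigenvalue $E_k^{[a,b]}(x)$ such that for every $x\in\mathbb{T}^d$ with $|x-x_0|<\exp(-3(\log\lambda)^\epsilon)$: (1) $|\lambda^{-1}E_k^{[a,b]}(x)-V(x)|\le2\lambda^{-1}$; (2) $|\psi_k^{[a,b]}(x,n)|<\exp(-(\log\lambda)|n|/2)$ for $n\ne0$; (3) $|\psi_k^{[a,b]}(x,0)-1|<\exp(-(\log\lambda)/2)$; (4) $\lambda^{-1}|E_j^{[a,b]}(x)-E_k^{[a,b]}(x)|\ge\frac18\exp(-(\log\lambda)^\epsilon)$ for all $j\ne k$. Furthermore, if in addition $V(x_0+n\omega)-V(x_0)\ge\exp(-(\log\lambda)^\epsilon)$ for all $n\in[a,b]\setminus\{0\}$, then also (4') $\lambda^{-1}(E_j^{[a,b]}(x)-E_k^{[a,b]}(x))\ge\frac18\exp(-(\log\lambda)^\epsilon)$ for all $j\ne k$.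
   Context: $\mathbb{T}=\mathbb{R}/\mathbb{Z}$, $d\ge2$; $|\cdot|$ is the sup-norm (distance on $\mathbb{T}^d$). $\omega\in\mathbb{T}^d$ is a fixed frequency vector. $V$ is a non-constant real-analytic function on $\mathbb{T}^d$ extending analytically to $\mathbb{T}^d_\rho=\{x+iy:|y|<\rho\}$, $0<\rho\le1$; $\|V\|_\infty=\sup_{\mathbb{T}^d_{3\rho/4}}|V|$; $\underline{\iota}=\inf_{x\in\mathbb{T}^d}\sup\{|V(x')-V(x)|:|x'-x|\le\rho/100\}$; $T_V=2+\max(0,\log\|V\|_\infty)+\max(0,\log\underline{\iota}^{-1})$. For $\lambda>0$, $H_{[a,b]}(x)$ is the restriction to $[a,b]$, with Dirichlet boundary conditions, of $[H(x)\psi](n)=-\psi(n+1)-\psi(n-1)+\lambda V(x+n\omega)\psi(n)$; $E_j^{[a,b]}(x)$ are its eigenvalues. *)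

theory Defs
  imports "HOL-Analysis.Analysis"
begin

text \<open>Points of the torus are represented by vectors in real^'d; functions on the torus
  are 1-periodic functions on real^'d.\<close>

definition torus_dist :: "real^'d \<Rightarrow> real^'d \<Rightarrow> real" where
  "torus_dist x y = Max (range (\<lambda>i. \<bar>(x$i - y$i) - of_int (round (x$i - y$i))\<bar>))"

definition torus_periodic :: "(real^'d \<Rightarrow> real) \<Rightarrow> bool" where
  "torus_periodic V \<longleftrightarrow> (\<forall>x i. V (x + axis i 1) = V x)"

text \<open>Holomorphy in several complex variables: complex-linear Frechet derivative.\<close>
definition holo_on :: "(complex^'d) set \<Rightarrow> (complex^'d \<Rightarrow> complex) \<Rightarrow> bool" where
  "holo_on S f \<longleftrightarrow> (\<forall>z\<in>S. \<exists>L. (f has_derivative L) (at z) \<and>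
       (\<forall>w. L (\<chi> i. \<i> * w$i) = \<i> * L w))"

definition strip :: "real \<Rightarrow> (complex^'d) set" where
  "strip r = {z. \<forall>i. \<bar>Im (z$i)\<bar> < r}"

definition analytic_ext :: "real \<Rightarrow> (real^'d \<Rightarrow> real) \<Rightarrow> (complex^'d \<Rightarrow> complex) \<Rightarrow> bool" where
  "analytic_ext r V Vc \<longleftrightarrow> holo_on (strip r) Vc \<and>
     (\<forall>x. Vc (\<chi> i. complex_of_real (x$i)) = complex_of_real (V x))"

definition sup_norm_strip :: "real \<Rightarrow> (complex^'d \<Rightarrow> complex) \<Rightarrow> real" where
  "sup_norm_strip r Vc = Sup ((\<lambda>z. cmod (Vc z)) ` strip (3 * r / 4))"

definition iota_low :: "real \<Rightarrow> (real^'d \<Rightarrow> real) \<Rightarrow> real" where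
  "iota_low r V = Inf (range (\<lambda>x. Sup {\<bar>V x' - V x\<bar> | x'. torus_dist x' x \<le> r / 100}))"

definition T_V :: "real \<Rightarrow> (real^'d \<Rightarrow> real) \<Rightarrow> (complex^'d \<Rightarrow> complex) \<Rightarrow> real" where
  "T_V r V Vc = 2 + max 0 (ln (sup_norm_strip r Vc)) + max 0 (ln (inverse (iota_low r V)))"

text \<open>psi is an eigenvector (supported on [a,b], i.e. Dirichlet b.c.) of H_[a,b](x)
  with eigenvalue E, where (H psi)(n) = -psi(n+1) - psi(n-1) + lam V(x + n omega) psi(n).\<close>
definition dir_eigvec :: "real \<Rightarrow> (real^'d \<Rightarrow> real) \<Rightarrow> real^'d \<Rightarrow> real^'d \<Rightarrow> int \<Rightarrow> int
    \<Rightarrow> real \<Rightarrow> (int \<Rightarrow> real) \<Rightarrow> bool" where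
  "dir_eigvec lam V \<omega> x a b E \<psi> \<longleftrightarrow>
     (\<forall>n. n \<notin> {a..b} \<longrightarrow> \<psi> n = 0) \<and> (\<exists>n. \<psi> n \<noteq> 0) \<and>
     (\<forall>n\<in>{a..b}. - \<psi> (n + 1) - \<psi> (n - 1) + lam * V (x + of_int n *\<^sub>R \<omega>) * \<psi> n = E * \<psi> n)"

definition dir_eigs :: "real \<Rightarrow> (real^'d \<Rightarrow> real) \<Rightarrow> real^'d \<Rightarrow> real^'d \<Rightarrow> int \<Rightarrow> int \<Rightarrow> real set" where
  "dir_eigs lam V \<omega> x a b = {E. \<exists>\<psi>. dir_eigvec lam V \<omega> x a b E \<psi>}"

text \<open>E_j^{[a,b]}(x), j = 0..b-a, in increasing order (the eigenvalues are simple).\<close>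
definition dir_E :: "real \<Rightarrow> (real^'d \<Rightarrow> real) \<Rightarrow> real^'d \<Rightarrow> real^'d \<Rightarrow> int \<Rightarrow> int \<Rightarrow> nat \<Rightarrow> real" where
  "dir_E lam V \<omega> x a b j = sorted_list_of_set (dir_eigs lam V \<omega> x a b) ! j"

end

theory Submission
  imports Defs "HOL-Complex_Analysis.Complex_Analysis" "HOL-Computational_Algebra.Polynomial"
begin

fun Qp :: "(nat \<Rightarrow> real) \<Rightarrow> nat \<Rightarrow> real poly" where
  "Qp e 0 = 0"
| "Qp e (Suc 0) = 1"
| "Qp e (Suc (Suc i)) = [:e i, -1:] * Qp e (Suc i) - Qp e i"

lemma Qp_rec: "poly (Qp e (Suc (Suc i))) E = (e i - E) * poly (Qp e (Suc i)) E - poly (Qp e i) E"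
  by (simp add: algebra_simps)

lemma deg_step:
  fixes p q :: "real poly"
  assumes "degree p \<le> Suc i" "degree q \<le> i" "coeff p (Suc i) = c1"
  shows "degree ([:a, -1:] * p - q) \<le> Suc (Suc i) \<and> coeff ([:a, -1:] * p - q) (Suc (Suc i)) = - c1"
proof -
  have eq: "[:a, -1:] * p - q = smult a p + pCons 0 (smult (-1) p) - q" by simp
  have "degree (smult a p + pCons 0 (smult (-1) p) - q) \<le> Suc (Suc i)"
    using assms
    by (intro degree_diff_le degree_add_le) (auto intro: le_trans[OF degree_smult_le] simp: degree_pCons_eq_if)
  moreover have "coeff (smult a p + pCons 0 (smult (-1) p) - q) (Suc (Suc i)) = - c1"
    using assms by (simp add: coeff_eq_0)
  ultimately show ?thesis unfolding eq by simp
qed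

lemma Qp_deg_coeff:
  "(degree (Qp e (Suc i)) \<le> i \<and> coeff (Qp e (Suc i)) i = (-1)^i) \<and>
   (degree (Qp e (Suc (Suc i))) \<le> Suc i \<and> coeff (Qp e (Suc (Suc i))) (Suc i) = (-1)^(Suc i))"
proof (induction i)
  case 0
  then show ?case by simp
next
  case (Suc i)
  then have "degree ([:e (Suc i), -1:] * Qp e (Suc (Suc i)) - Qp e (Suc i)) \<le> Suc (Suc i) \<and>
     coeff ([:e (Suc i), -1:] * Qp e (Suc (Suc i)) - Qp e (Suc i)) (Suc (Suc i)) = - ((-1)^(Suc i))"
    by (intro deg_step) auto
  then show ?case using Suc by simp
qed

lemma Qp_nz: "Qp e (Suc i) \<noteq> 0"
proof
  assume "Qp e (Suc i) = 0"
  then have "coeff (Qp e (Suc i)) i = 0" by simp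
  then show False using Qp_deg_coeff[of e i] by simp
qed

definition roots :: "(nat \<Rightarrow> real) \<Rightarrow> nat \<Rightarrow> real set" where
  "roots e m = {r. poly (Qp e (Suc m)) r = 0}"

definition cnt :: "(nat \<Rightarrow> real) \<Rightarrow> nat \<Rightarrow> real \<Rightarrow> nat" where
  "cnt e m E = card {r. poly (Qp e (Suc m)) r = 0 \<and> r < E}"

lemma roots_finite: "finite (roots e m)"
  unfolding roots_def using poly_roots_finite[OF Qp_nz] .

lemma roots_card_le: "card (roots e m) \<le> m"
  unfolding roots_def using card_poly_roots_bound[OF Qp_nz, of e m] Qp_deg_coeff[of e m] by linarith

lemma no_common_root:
  "poly (Qp e (Suc i)) E = 0 \<Longrightarrow> poly (Qp e (Suc (Suc i))) E = 0 \<Longrightarrow> False"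
proof (induction i)
  case 0
  then show ?case by simp
next
  case (Suc i)
  have "poly (Qp e (Suc i)) E = 0"
    using Suc.prems Qp_rec[of e "Suc i" E] by simp
  then show ?case using Suc by simp
qed

lemma dom_step:
  fixes c x y :: real
  assumes "2 \<le> \<bar>c\<bar>" "\<bar>x\<bar> \<le> \<bar>y\<bar>" "y \<noteq> 0"
  shows "\<bar>y\<bar> \<le> \<bar>c * y - x\<bar>" "c * y - x \<noteq> 0" "((c * y - x) * y < 0) \<longleftrightarrow> c < 0"
proof -
  have "\<bar>c * y\<bar> = \<bar>c\<bar> * \<bar>y\<bar>" by (simp add: abs_mult)
  moreover have "\<bar>c\<bar> * \<bar>y\<bar> \<ge> 2 * \<bar>y\<bar>" using assms by (simp add: mult_right_mono)
  ultimately show 1: "\<bar>y\<bar> \<le> \<bar>c * y - x\<bar>" using assms by linarith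
  then show "c * y - x \<noteq> 0" using assms by auto
  have "\<bar>x\<bar> * \<bar>y\<bar> \<le> \<bar>y\<bar> * \<bar>y\<bar>" using assms by (intro mult_right_mono) auto
  then have xy: "\<bar>x * y\<bar> \<le> y * y" by (simp add: abs_mult)
  have yy: "y * y > 0" using assms by (cases "y > 0") (auto simp: mult_pos_pos mult_neg_neg)
  have "(c * y - x) * y = c * (y * y) - x * y" by (simp add: algebra_simps)
  moreover have "c < 0 \<Longrightarrow> c * (y*y) \<le> -2 * (y * y)" using assms yy by (intro mult_right_mono) auto
  moreover have "\<not> c < 0 \<Longrightarrow> c * (y*y) \<ge> 2 * (y * y)" using assms yy by (simp add: mult_right_mono)
  ultimately show "((c * y - x) * y < 0) \<longleftrightarrow> c < 0" using xy yy by (smt (verit))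
qed

lemma dominance:
  assumes "\<forall>j<m. 2 \<le> \<bar>e j - E\<bar>"
  shows "i \<le> m \<Longrightarrow> \<bar>poly (Qp e i) E\<bar> \<le> \<bar>poly (Qp e (Suc i)) E\<bar> \<and> poly (Qp e (Suc i)) E \<noteq> 0"
proof (induction i)
  case 0
  then show ?case by simp
next
  case (Suc i)
  then have "2 \<le> \<bar>e i - E\<bar>" using assms by auto
  then show ?case using dom_step[of "e i - E" "poly (Qp e i) E" "poly (Qp e (Suc i)) E"] Suc Qp_rec[of e i E]
    by auto
qed

lemma dominance_sign:
  assumes "\<forall>j<m. 2 \<le> \<bar>e j - E\<bar>" "j < m"
  shows "poly (Qp e (Suc (Suc j))) E * poly (Qp e (Suc j)) E < 0 \<longleftrightarrow> e j < E"
proof -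
  have "\<bar>poly (Qp e j) E\<bar> \<le> \<bar>poly (Qp e (Suc j)) E\<bar> \<and> poly (Qp e (Suc j)) E \<noteq> 0"
    using dominance[OF assms(1), of j] assms(2) by simp
  then show ?thesis using dom_step(3)[of "e j - E" "poly (Qp e j) E" "poly (Qp e (Suc j)) E"]
      assms Qp_rec[of e j E] by auto
qed

lemma sign_low:
  assumes "\<forall>j<m. 2 \<le> e j - E"
  shows "i \<le> m \<Longrightarrow> poly (Qp e (Suc i)) E > 0"
proof (induction i)
  case 0
  then show ?case by simp
next
  case (Suc i)
  have d: "\<forall>j<m. 2 \<le> \<bar>e j - E\<bar>" using assms by force
  have im: "i < m" using Suc.prems by simp
  then have "\<not> e i < E" using assms by force
  then have "\<not> poly (Qp e (Suc (Suc i))) E * poly (Qp e (Suc i)) E < 0"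
    using dominance_sign[OF d im] by simp
  moreover have "poly (Qp e (Suc (Suc i))) E \<noteq> 0" using dominance[OF d, of "Suc i"] Suc.prems by simp
  moreover have "poly (Qp e (Suc i)) E > 0" using Suc by simp
  ultimately show ?case by (meson linorder_neqE_linordered_idom mult_neg_pos)
qed

lemma sign_high:
  assumes "\<forall>j<m. 2 \<le> E - e j"
  shows "i \<le> m \<Longrightarrow> (poly (Qp e (Suc i)) E > 0 \<longleftrightarrow> even i) \<and> poly (Qp e (Suc i)) E \<noteq> 0"
proof (induction i)
  case 0
  then show ?case by simp
next
  case (Suc i)
  have d: "\<forall>j<m. 2 \<le> \<bar>e j - E\<bar>" using assms by force
  have im: "i < m" using Suc.prems by simp
  then have "e i < E" using assms by force
  then have "poly (Qp e (Suc (Suc i))) E * poly (Qp e (Suc i)) E < 0"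
    using dominance_sign[OF d im] by simp
  moreover have "poly (Qp e (Suc (Suc i))) E \<noteq> 0" using dominance[OF d, of "Suc i"] Suc.prems by simp
  moreover have "(poly (Qp e (Suc i)) E > 0 \<longleftrightarrow> even i) \<and> poly (Qp e (Suc i)) E \<noteq> 0" using Suc by simp
  ultimately show ?case by (smt (verit) even_Suc mult_pos_pos mult_neg_neg)
qed

lemma sorted_idx:
  fixes R :: "real set"
  assumes "finite R" "i < card R"
  shows "sorted_list_of_set R ! i \<in> R" "card {s\<in>R. s < sorted_list_of_set R ! i} = i"
proof -
  let ?ys = "sorted_list_of_set R"
  have len: "length ?ys = card R" by simp
  have st: "sorted_wrt (<) ?ys" by (rule strict_sorted_list_of_set)
  have setys: "set ?ys = R" using assms by simp
  show "?ys ! i \<in> R" using assms len setys nth_mem by metis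
  have "{s\<in>R. s < ?ys ! i} = (\<lambda>j. ?ys ! j) ` {..<i}"
  proof (intro set_eqI iffI)
    fix s assume s: "s \<in> {s\<in>R. s < ?ys ! i}"
    then obtain j where j: "j < length ?ys" "s = ?ys ! j" using setys by (metis in_set_conv_nth mem_Collect_eq)
    have "j < i"
    proof (rule ccontr)
      assume "\<not> j < i"
      then have "i = j \<or> i < j" by auto
      then have "?ys ! i \<le> ?ys ! j" using sorted_wrt_nth_less[OF st, of i j] j by force
      then show False using s j by simp
    qed
    then show "s \<in> (\<lambda>j. ?ys ! j) ` {..<i}" using j by auto
  next
    fix s assume "s \<in> (\<lambda>j. ?ys ! j) ` {..<i}"
    then obtain j where j: "j < i" "s = ?ys ! j" by auto
    then show "s \<in> {s\<in>R. s < ?ys ! i}"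
      using sorted_wrt_nth_less[OF st, of j i] assms len setys nth_mem
      by (metis (mono_tags, lifting) dual_order.strict_trans mem_Collect_eq)
  qed
  moreover have "inj_on (\<lambda>j. ?ys ! j) {..<i}"
    using distinct_sorted_list_of_set[of R] assms len
    by (auto simp: inj_on_def nth_eq_iff_index_eq)
  ultimately show "card {s\<in>R. s < ?ys ! i} = i" by (simp add: card_image)
qed

lemma sorted_mono:
  fixes R :: "real set"
  assumes "finite R" "i < j" "j < card R"
  shows "sorted_list_of_set R ! i < sorted_list_of_set R ! j"
  using sorted_wrt_nth_less[OF strict_sorted_list_of_set, of i j R] assms by simp

lemma sorted_idx_of:
  fixes R :: "real set"
  assumes "finite R" "r \<in> R"
  shows "sorted_list_of_set R ! card {s\<in>R. s < r} = r" "card {s\<in>R. s < r} < card R"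
proof -
  have "r \<in> set (sorted_list_of_set R)" using assms by simp
  then obtain i where i: "i < length (sorted_list_of_set R)" "sorted_list_of_set R ! i = r"
    by (metis in_set_conv_nth)
  then have "i < card R" by simp
  then have "card {s\<in>R. s < r} = i" using sorted_idx[OF assms(1)] i by metis
  then show "sorted_list_of_set R ! card {s\<in>R. s < r} = r" "card {s\<in>R. s < r} < card R"
    using i \<open>i < card R\<close> by auto
qed

lemma downward_closed:
  fixes S :: "nat set"
  assumes "finite S" "\<And>i j. i \<in> S \<Longrightarrow> j \<le> i \<Longrightarrow> j \<in> S"
  shows "S = {..<card S}"
proof (cases "S = {}")
  case True
  then show ?thesis by simp
next
  case False
  have M: "Max S \<in> S" using assms False by simp
  have "S = {..Max S}"
    using assms(1) M assms(2)[OF M] by (auto intro: Max_ge)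
  then show ?thesis by (metis card_atMost lessThan_Suc_atMost)
qed

lemma no_root_same_sign:
  fixes p :: "real poly"
  assumes "a \<le> b" "\<forall>x. a \<le> x \<and> x \<le> b \<longrightarrow> poly p x \<noteq> 0"
  shows "poly p a > 0 \<longleftrightarrow> poly p b > 0"
proof (cases "a = b")
  case True then show ?thesis by simp
next
  case False
  then have ab: "a < b" using assms by simp
  have na: "poly p a \<noteq> 0" "poly p b \<noteq> 0" using assms by auto
  show ?thesis
  proof (rule ccontr)
    assume "\<not> ?thesis"
    then have "poly p a * poly p b < 0" using na by (smt (verit) mult_pos_neg mult_neg_pos)
    then obtain x where "a < x" "x < b" "poly p x = 0" using poly_IVT[OF ab] by blast
    then show False using assms by auto
  qed
qed

declare Qp.simps(3)[simp del]

lemma sturm_step: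
  fixes e :: "nat \<Rightarrow> real" and B :: real and m :: nat
  assumes bnd: "\<forall>j. \<bar>e j\<bar> \<le> B"
    and SFg: "\<forall>E. poly (Qp e (Suc m)) E \<noteq> 0 \<longrightarrow> (poly (Qp e (Suc m)) E > 0 \<longleftrightarrow> even (cnt e m E))"
    and ILm: "\<forall>r. poly (Qp e (Suc (Suc m))) r = 0 \<longrightarrow> cnt e m r = cnt e (Suc m) r"
    and CDf: "card (roots e (Suc m)) = Suc m"
  shows "(\<forall>E. poly (Qp e (Suc (Suc (Suc m)))) E \<noteq> 0 \<longrightarrow>
            (poly (Qp e (Suc (Suc (Suc m)))) E > 0 \<longleftrightarrow> even (cnt e (Suc (Suc m)) E)))
       \<and> (\<forall>r. poly (Qp e (Suc (Suc (Suc m)))) r = 0 \<longrightarrow> cnt e (Suc m) r = cnt e (Suc (Suc m)) r)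
       \<and> card (roots e (Suc (Suc m))) = Suc (Suc m)
       \<and> (\<forall>E. cnt e (Suc m) E \<le> cnt e (Suc (Suc m)) E \<and> cnt e (Suc (Suc m)) E \<le> cnt e (Suc m) E + 1)"
proof -
  define n where "n = Suc m"
  define f where "f = Qp e (Suc (Suc m))"
  define g where "g = Qp e (Suc m)"
  define h where "h = Qp e (Suc (Suc (Suc m)))"
  define R where "R = roots e (Suc m)"
  define Z where "Z = roots e (Suc (Suc m))"
  define ys where "ys = sorted_list_of_set R"
  define Lo where "Lo = - B - 2"
  define Hi where "Hi = B + 2"
  have finR: "finite R" unfolding R_def by (rule roots_finite)
  have cardR: "card R = n" unfolding R_def n_def by (rule CDf)
  have R_eq: "R = {r. poly f r = 0}" unfolding R_def roots_def f_def by simp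
  have Z_eq: "Z = {r. poly h r = 0}" unfolding Z_def roots_def h_def by simp
  have finZ: "finite Z" unfolding Z_def by (rule roots_finite)
  have cardZ_le: "card Z \<le> Suc n" unfolding Z_def n_def using roots_card_le by simp
  have cntR: "\<And>E. cnt e (Suc m) E = card {s\<in>R. s < E}"
    unfolding cnt_def R_eq f_def by simp
  have cntZ: "\<And>E. cnt e (Suc (Suc m)) E = card {s\<in>Z. s < E}"
    unfolding cnt_def Z_eq h_def by simp
  have lowroot: "\<And>i E. E \<le> Lo \<Longrightarrow> poly (Qp e (Suc i)) E > 0"
  proof -
    fix i E assume "E \<le> Lo"
    then have "\<forall>j<i. 2 \<le> e j - E" using bnd unfolding Lo_def by (smt (verit))
    then show "poly (Qp e (Suc i)) E > 0" using sign_low by blast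
  qed
  have highroot: "\<And>i E. Hi \<le> E \<Longrightarrow> (poly (Qp e (Suc i)) E > 0 \<longleftrightarrow> even i) \<and> poly (Qp e (Suc i)) E \<noteq> 0"
  proof -
    fix i E assume "Hi \<le> E"
    then have "\<forall>j<i. 2 \<le> E - e j" using bnd unfolding Hi_def by (smt (verit))
    then show "(poly (Qp e (Suc i)) E > 0 \<longleftrightarrow> even i) \<and> poly (Qp e (Suc i)) E \<noteq> 0"
      using sign_high by blast
  qed
  have R_range: "\<And>r. r \<in> R \<Longrightarrow> Lo < r \<and> r < Hi"
  proof -
    fix r assume "r \<in> R"
    then have r0: "poly f r = 0" using R_eq by simp
    show "Lo < r \<and> r < Hi"
    proof (rule ccontr)
      assume "\<not> (Lo < r \<and> r < Hi)"
      then have "r \<le> Lo \<or> Hi \<le> r" by auto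
      then have "poly f r \<noteq> 0" unfolding f_def
      proof
        assume "r \<le> Lo" then show "poly (Qp e (Suc (Suc m))) r \<noteq> 0" using lowroot[of r "Suc m"] by simp
      next
        assume "Hi \<le> r" then show "poly (Qp e (Suc (Suc m))) r \<noteq> 0" using highroot[of r "Suc m"] by simp
      qed
      then show False using r0 by simp
    qed
  qed
  define pt where "pt j = (if j = 0 then Lo else if j \<le> n then ys ! (j - 1) else Hi)" for j
  have pt_in: "\<And>j. 1 \<le> j \<Longrightarrow> j \<le> n \<Longrightarrow> pt j \<in> R"
    unfolding pt_def ys_def using sorted_idx(1)[OF finR] cardR by auto
  have pt_mono: "\<And>i j. i < j \<Longrightarrow> j \<le> Suc n \<Longrightarrow> pt i < pt j"
  proof -
    fix i j :: nat assume ij: "i < j" "j \<le> Suc n"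
    have B0: "0 \<le> B" using bnd by (metis abs_ge_zero order_trans)
    have LH: "Lo < Hi" unfolding Lo_def Hi_def using B0 by simp
    show "pt i < pt j"
    proof (cases "i = 0")
      case True
      show ?thesis
      proof (cases "j \<le> n")
        case True2: True
        then have "pt j \<in> R" using pt_in ij by simp
        then show ?thesis using R_range True unfolding pt_def by simp
      next
        case False
        then show ?thesis using True LH ij unfolding pt_def by simp
      qed
    next
      case False
      show ?thesis
      proof (cases "j = Suc n")
        case True
        have "pt i \<in> R" using pt_in ij False True by simp
        then show ?thesis using R_range True unfolding pt_def by simp
      next
        case False2: False
        then have "pt i = ys ! (i - 1)" "pt j = ys ! (j - 1)" using ij False unfolding pt_def by auto
        moreover have "ys ! (i - 1) < ys ! (j - 1)"
          unfolding ys_def using sorted_mono[OF finR, of "i - 1" "j - 1"] ij False False2 cardR by simp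
        ultimately show ?thesis by simp
      qed
    qed
  qed
  have pt_sign: "\<And>j. j \<le> Suc n \<Longrightarrow> poly h (pt j) \<noteq> 0 \<and> (poly h (pt j) > 0 \<longleftrightarrow> even j)"
  proof -
    fix j assume j: "j \<le> Suc n"
    show "poly h (pt j) \<noteq> 0 \<and> (poly h (pt j) > 0 \<longleftrightarrow> even j)"
    proof (cases "j = 0")
      case True
      then show ?thesis unfolding pt_def h_def using lowroot[of Lo "Suc (Suc m)"] by simp
    next
      case False
      show ?thesis
      proof (cases "j = Suc n")
        case True
        then show ?thesis unfolding pt_def h_def n_def using highroot[of Hi "Suc (Suc m)"] by simp
      next
        case False2: False
        define r where "r = pt j"
        have rR: "r \<in> R" using pt_in[of j] False False2 j unfolding r_def by simp
        have fr: "poly f r = 0" using rR R_eq by simp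
        have hr: "poly h r = - poly g r"
          unfolding h_def g_def using Qp_rec[of e "Suc m" r] fr unfolding f_def by simp
        have gr: "poly g r \<noteq> 0" unfolding g_def using no_common_root[of e m r] fr unfolding f_def by auto
        have c1: "cnt e m r = cnt e (Suc m) r" using ILm fr unfolding f_def by simp
        have "r = ys ! (j - 1)" unfolding r_def pt_def using False False2 j by simp
        then have c2: "card {s\<in>R. s < r} = j - 1"
          using sorted_idx(2)[OF finR, of "j - 1"] cardR False False2 j unfolding ys_def by simp
        have "poly g r > 0 \<longleftrightarrow> even (j - 1)" using SFg gr c1 c2 cntR unfolding g_def by simp
        then show ?thesis using hr gr False unfolding r_def[symmetric]
          by (cases j) auto
      qed
    qed
  qed
  have ivt: "\<forall>j\<le>n. \<exists>z. pt j < z \<and> z < pt (Suc j) \<and> poly h z = 0"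
  proof (intro allI impI)
    fix j assume j: "j \<le> n"
    have s1: "poly h (pt j) \<noteq> 0 \<and> (poly h (pt j) > 0 \<longleftrightarrow> even j)" using pt_sign j by simp
    have s2: "poly h (pt (Suc j)) \<noteq> 0 \<and> (poly h (pt (Suc j)) > 0 \<longleftrightarrow> even (Suc j))" using pt_sign j by simp
    have "poly h (pt j) * poly h (pt (Suc j)) < 0"
      using s1 s2 by (cases "even j") (auto simp: mult_pos_neg mult_neg_pos)
    moreover have "pt j < pt (Suc j)" using pt_mono j by simp
    ultimately show "\<exists>z. pt j < z \<and> z < pt (Suc j) \<and> poly h z = 0"
      using poly_IVT by blast
  qed
  then obtain zf where zf: "\<And>j. j \<le> n \<Longrightarrow> pt j < zf j \<and> zf j < pt (Suc j) \<and> poly h (zf j) = 0"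
    by metis
  have pt_le: "\<And>i j. i \<le> j \<Longrightarrow> j \<le> Suc n \<Longrightarrow> pt i \<le> pt j"
    using pt_mono by (metis le_less)
  have zf_mono: "\<And>i j. i < j \<Longrightarrow> j \<le> n \<Longrightarrow> zf i < zf j"
  proof -
    fix i j :: nat assume ij: "i < j" "j \<le> n"
    have "zf i < pt (Suc i)" using zf ij by simp
    also have "pt (Suc i) \<le> pt j" using pt_le ij by simp
    also have "pt j < zf j" using zf ij by simp
    finally show "zf i < zf j" .
  qed
  have inj: "inj_on zf {..n}"
    by (intro inj_onI) (metis atMost_iff linorder_neqE_nat zf_mono less_irrefl)
  have sub: "zf ` {..n} \<subseteq> Z" using zf Z_eq by auto
  have cimg: "card (zf ` {..n}) = Suc n" using card_image[OF inj] by simp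
  have Z_img: "Z = zf ` {..n}"
    using card_seteq[OF finZ sub] cimg cardZ_le by simp
  have cntZ_idx: "\<And>E. card {s\<in>Z. s < E} = card {j\<in>{..n}. zf j < E}"
  proof -
    fix E
    have "{s\<in>Z. s < E} = zf ` {j\<in>{..n}. zf j < E}" using Z_img by auto
    moreover have "inj_on zf {j\<in>{..n}. zf j < E}" using inj by (rule inj_on_subset) auto
    ultimately show "card {s\<in>Z. s < E} = card {j\<in>{..n}. zf j < E}" by (simp add: card_image)
  qed
  have ys_pt: "\<And>i. i < n \<Longrightarrow> ys ! i = pt (Suc i)" unfolding pt_def by simp
  have R_img: "R = (\<lambda>i. ys ! i) ` {..<n}"
  proof -
    have "set ys = R" "length ys = n" unfolding ys_def using finR cardR by auto
    then show ?thesis by (auto simp: in_set_conv_nth)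
  qed
  have injys: "inj_on (\<lambda>i. ys ! i) {..<n}"
    unfolding ys_def using distinct_sorted_list_of_set[of R] cardR
    by (auto simp: inj_on_def nth_eq_iff_index_eq)
  have cntR_idx: "\<And>E. card {s\<in>R. s < E} = card {i\<in>{..<n}. pt (Suc i) < E}"
  proof -
    fix E
    have "{s\<in>R. s < E} = (\<lambda>i. ys ! i) ` {i\<in>{..<n}. pt (Suc i) < E}" using R_img ys_pt by auto
    moreover have "inj_on (\<lambda>i. ys ! i) {i\<in>{..<n}. pt (Suc i) < E}" using injys by (rule inj_on_subset) auto
    ultimately show "card {s\<in>R. s < E} = card {i\<in>{..<n}. pt (Suc i) < E}" by (simp add: card_image)
  qed
  have INC: "\<forall>E. cnt e (Suc m) E \<le> cnt e (Suc (Suc m)) E \<and> cnt e (Suc (Suc m)) E \<le> cnt e (Suc m) E + 1"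
  proof
    fix E
    define A where "A = {i\<in>{..<n}. pt (Suc i) < E}"
    define Bs where "Bs = {j\<in>{..n}. zf j < E}"
    have "A \<subseteq> Bs" unfolding A_def Bs_def using zf by (auto, smt (verit, best) less_imp_le_nat)
    then have 1: "card A \<le> card Bs" by (intro card_mono) (auto simp: Bs_def)
    have "Bs \<subseteq> insert 0 (Suc ` A)"
    proof
      fix j assume jB: "j \<in> Bs"
      show "j \<in> insert 0 (Suc ` A)"
      proof (cases j)
        case 0 then show ?thesis by simp
      next
        case (Suc i)
        then have "pt (Suc i) < E" using jB zf[of j] unfolding Bs_def by force
        then show ?thesis using Suc jB unfolding A_def Bs_def by auto
      qed
    qed
    then have "card Bs \<le> card (insert 0 (Suc ` A))" by (intro card_mono) (auto simp: A_def)
    also have "\<dots> \<le> Suc (card (Suc ` A))" by (rule card_insert_le_m1) auto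
    also have "\<dots> = Suc (card A)" by (simp add: card_image)
    finally have 2: "card Bs \<le> card A + 1" by simp
    show "cnt e (Suc m) E \<le> cnt e (Suc (Suc m)) E \<and> cnt e (Suc (Suc m)) E \<le> cnt e (Suc m) E + 1"
      using 1 2 cntR cntZ cntR_idx cntZ_idx unfolding A_def Bs_def by simp
  qed
  have IL: "\<forall>r. poly h r = 0 \<longrightarrow> cnt e (Suc m) r = cnt e (Suc (Suc m)) r"
  proof (intro allI impI)
    fix r assume "poly h r = 0"
    then obtain j where j: "j \<le> n" "r = zf j" using Z_img Z_eq by auto
    have "{i\<in>{..<n}. pt (Suc i) < zf j} = {..<j}"
    proof (intro set_eqI iffI)
      fix i assume "i \<in> {i\<in>{..<n}. pt (Suc i) < zf j}"
      then have i: "i < n" "pt (Suc i) < zf j" by auto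
      show "i \<in> {..<j}"
      proof (rule ccontr)
        assume "i \<notin> {..<j}"
        then have "Suc j \<le> Suc i" by simp
        then have "pt (Suc j) \<le> pt (Suc i)" using pt_le i by simp
        then show False using zf[OF j(1)] i by simp
      qed
    next
      fix i assume "i \<in> {..<j}"
      then have i: "i < j" by simp
      then have "pt (Suc i) \<le> pt j" using pt_le j by simp
      then show "i \<in> {i\<in>{..<n}. pt (Suc i) < zf j}" using zf[OF j(1)] i j by auto
    qed
    moreover have "{j'\<in>{..n}. zf j' < zf j} = {..<j}"
    proof (intro set_eqI iffI)
      fix i assume "i \<in> {j'\<in>{..n}. zf j' < zf j}"
      then show "i \<in> {..<j}" using zf_mono j by (metis (no_types, lifting) atMost_iff le_less
            lessThan_iff linorder_not_less mem_Collect_eq order.asym)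
    next
      fix i assume "i \<in> {..<j}"
      then show "i \<in> {j'\<in>{..n}. zf j' < zf j}" using zf_mono j by auto
    qed
    ultimately show "cnt e (Suc m) r = cnt e (Suc (Suc m)) r"
      using cntR cntZ cntR_idx cntZ_idx j by simp
  qed
  have SF: "\<forall>E. poly h E \<noteq> 0 \<longrightarrow> (poly h E > 0 \<longleftrightarrow> even (cnt e (Suc (Suc m)) E))"
  proof (intro allI impI)
    fix E assume hE: "poly h E \<noteq> 0"
    define S where "S = {j\<in>{..n}. zf j < E}"
    define c where "c = card S"
    have finS: "finite S" unfolding S_def by simp
    have "S = {..<c}" unfolding c_def
    proof (rule downward_closed[OF finS])
      fix i j assume "i \<in> S" "j \<le> i"
      then show "j \<in> S" unfolding S_def using zf_mono
        by (metis (no_types, lifting) atMost_iff le_less le_trans mem_Collect_eq order.strict_trans)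
    qed
    then have S_iff: "\<And>j. j \<le> n \<Longrightarrow> (zf j < E \<longleftrightarrow> j < c)" unfolding S_def by blast
    have cle: "c \<le> Suc n" unfolding c_def S_def
      by (metis (no_types, lifting) card_atMost card_mono finite_atMost mem_Collect_eq subsetI)
    define lo where "lo = min E (pt c)"
    define hi where "hi = max E (pt c)"
    have noroot: "\<forall>x. lo \<le> x \<and> x \<le> hi \<longrightarrow> poly h x \<noteq> 0"
    proof (intro allI impI notI)
      fix x assume x: "lo \<le> x \<and> x \<le> hi" "poly h x = 0"
      then obtain j where j: "j \<le> n" "x = zf j" using Z_img Z_eq by auto
      show False
      proof (cases "j < c")
        case True
        then have "zf j < E" using S_iff j by simp
        moreover have "zf j < pt c" using zf[OF j(1)] pt_le[of "Suc j" c] True cle by force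
        ultimately show False using x j unfolding lo_def hi_def by auto
      next
        case False
        then have "\<not> zf j < E" using S_iff j by simp
        moreover have "zf j \<noteq> E" using hE x j by auto
        moreover have "pt c < zf j" using zf[OF j(1)] pt_le[of c j] False j by force
        ultimately show False using x j unfolding lo_def hi_def by auto
      qed
    qed
    have "poly h lo > 0 \<longleftrightarrow> poly h hi > 0"
      using no_root_same_sign[of lo hi h] noroot unfolding lo_def hi_def by simp
    then have "poly h E > 0 \<longleftrightarrow> poly h (pt c) > 0" unfolding lo_def hi_def
      by (cases "E \<le> pt c") (auto simp: min_def max_def)
    also have "\<dots> \<longleftrightarrow> even c" using pt_sign cle by simp
    finally show "poly h E > 0 \<longleftrightarrow> even (cnt e (Suc (Suc m)) E)"
      using cntZ cntZ_idx unfolding c_def S_def by simp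
  qed
  have CD: "card (roots e (Suc (Suc m))) = Suc (Suc m)"
    using Z_img cimg unfolding Z_def n_def by simp
  show ?thesis using SF IL CD INC unfolding h_def by blast
qed

definition SFp where "SFp e m \<longleftrightarrow> (\<forall>E. poly (Qp e (Suc m)) E \<noteq> 0 \<longrightarrow> (poly (Qp e (Suc m)) E > 0 \<longleftrightarrow> even (cnt e m E)))"
definition ILp where "ILp e m \<longleftrightarrow> (\<forall>r. poly (Qp e (Suc (Suc m))) r = 0 \<longrightarrow> cnt e m r = cnt e (Suc m) r)"
definition INCp where "INCp e m \<longleftrightarrow> (\<forall>E. cnt e m E \<le> cnt e (Suc m) E \<and> cnt e (Suc m) E \<le> cnt e m E + 1)"

lemma Qp2: "poly (Qp e (Suc (Suc 0))) E = e 0 - E"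
  using Qp_rec[of e 0 E] by simp

lemma sturm_all:
  assumes bnd: "\<forall>j. \<bar>e j\<bar> \<le> B"
  shows "SFp e m \<and> SFp e (Suc m) \<and> ILp e m \<and> card (roots e (Suc m)) = Suc m \<and> INCp e m"
proof (induction m)
  case 0
  have c0: "cnt e 0 E = 0" for E unfolding cnt_def by simp
  have c1: "cnt e (Suc 0) E = (if e 0 < E then 1 else 0)" for E
  proof -
    have "{r. poly (Qp e (Suc (Suc 0))) r = 0 \<and> r < E} = (if e 0 < E then {e 0} else {})"
      using Qp2[of e] by auto
    then show ?thesis unfolding cnt_def by simp
  qed
  have r1: "roots e (Suc 0) = {e 0}" unfolding roots_def using Qp2[of e] by auto
  show ?case
    unfolding SFp_def ILp_def INCp_def using c0 c1 r1 Qp2[of e] by auto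
next
  case (Suc m)
  have st: "(\<forall>E. poly (Qp e (Suc (Suc (Suc m)))) E \<noteq> 0 \<longrightarrow>
            (poly (Qp e (Suc (Suc (Suc m)))) E > 0 \<longleftrightarrow> even (cnt e (Suc (Suc m)) E)))
       \<and> (\<forall>r. poly (Qp e (Suc (Suc (Suc m)))) r = 0 \<longrightarrow> cnt e (Suc m) r = cnt e (Suc (Suc m)) r)
       \<and> card (roots e (Suc (Suc m))) = Suc (Suc m)
       \<and> (\<forall>E. cnt e (Suc m) E \<le> cnt e (Suc (Suc m)) E \<and> cnt e (Suc (Suc m)) E \<le> cnt e (Suc m) E + 1)"
    using Suc unfolding SFp_def ILp_def by (intro sturm_step[OF bnd]) auto
  then show ?case using Suc unfolding SFp_def ILp_def INCp_def by auto
qed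

definition sc :: "(nat \<Rightarrow> real) \<Rightarrow> nat \<Rightarrow> real \<Rightarrow> nat" where
  "sc e m E = (\<Sum>j<m. if poly (Qp e (Suc (Suc j))) E * poly (Qp e (Suc j)) E < 0 then 1 else 0)"

lemma count_formula:
  assumes bnd: "\<forall>j. \<bar>e j\<bar> \<le> B"
  shows "(\<forall>i\<le>m. poly (Qp e (Suc i)) E \<noteq> 0) \<Longrightarrow> cnt e m E = sc e m E"
proof (induction m)
  case 0
  then show ?case unfolding cnt_def sc_def by simp
next
  case (Suc m)
  have IH: "cnt e m E = sc e m E" using Suc by simp
  have nz1: "poly (Qp e (Suc m)) E \<noteq> 0" and nz2: "poly (Qp e (Suc (Suc m))) E \<noteq> 0" using Suc.prems by auto
  have J: "SFp e m" "SFp e (Suc m)" "INCp e m" using sturm_all[OF bnd, of m] by auto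
  have s1: "poly (Qp e (Suc m)) E > 0 \<longleftrightarrow> even (cnt e m E)" using J(1) nz1 unfolding SFp_def by simp
  have s2: "poly (Qp e (Suc (Suc m))) E > 0 \<longleftrightarrow> even (cnt e (Suc m) E)" using J(2) nz2 unfolding SFp_def by simp
  have inc: "cnt e m E \<le> cnt e (Suc m) E" "cnt e (Suc m) E \<le> cnt e m E + 1" using J(3) unfolding INCp_def by auto
  have "cnt e (Suc m) E = cnt e m E + (if poly (Qp e (Suc (Suc m))) E * poly (Qp e (Suc m)) E < 0 then 1 else 0)"
  proof (cases "cnt e (Suc m) E = cnt e m E")
    case True
    then have "(poly (Qp e (Suc (Suc m))) E > 0) = (poly (Qp e (Suc m)) E > 0)" using s1 s2 by simp
    then have "\<not> poly (Qp e (Suc (Suc m))) E * poly (Qp e (Suc m)) E < 0"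
      using nz1 nz2 by (smt (verit) mult_neg_neg mult_pos_pos)
    then show ?thesis using True by simp
  next
    case False
    then have c: "cnt e (Suc m) E = Suc (cnt e m E)" using inc by simp
    then have "(poly (Qp e (Suc (Suc m))) E > 0) = (\<not> poly (Qp e (Suc m)) E > 0)" using s1 s2 by simp
    then have "poly (Qp e (Suc (Suc m))) E * poly (Qp e (Suc m)) E < 0"
      using nz1 nz2 by (smt (verit) mult_pos_neg mult_neg_pos)
    then show ?thesis using c by simp
  qed
  then show ?case using IH unfolding sc_def by simp
qed

lemma count_dominant:
  assumes bnd: "\<forall>j. \<bar>e j\<bar> \<le> B" and dom: "\<forall>j<m. 2 \<le> \<bar>e j - E\<bar>"
  shows "cnt e m E = card {j. j < m \<and> e j < E}"
proof -
  have nz: "\<forall>i\<le>m. poly (Qp e (Suc i)) E \<noteq> 0" using dominance[OF dom] by blast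
  have "cnt e m E = sc e m E" using count_formula[OF bnd nz] .
  also have "\<dots> = (\<Sum>j<m. if e j < E then 1 else 0)"
    unfolding sc_def using dominance_sign[OF dom] by (intro sum.cong) auto
  also have "\<dots> = sum (\<lambda>j. 1) {j\<in>{..<m}. e j < E}"
    using sum.inter_filter[of "{..<m}" "\<lambda>j. (1::nat)" "\<lambda>j. e j < E"] by simp
  also have "\<dots> = card {j. j < m \<and> e j < E}"
    by simp
  finally show ?thesis .
qed

lemma roots_card:
  assumes bnd: "\<forall>j. \<bar>e j\<bar> \<le> B"
  shows "card (roots e m) = m"
proof (cases m)
  case 0
  then show ?thesis unfolding roots_def by simp
next
  case (Suc k)
  then show ?thesis using sturm_all[OF bnd, of k] by simp
qed

definition jeig :: "(int \<Rightarrow> real) \<Rightarrow> int \<Rightarrow> int \<Rightarrow> real \<Rightarrow> (int \<Rightarrow> real) \<Rightarrow> bool" where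
  "jeig d a b E \<psi> \<longleftrightarrow> (\<forall>n. n \<notin> {a..b} \<longrightarrow> \<psi> n = 0) \<and> (\<exists>n. \<psi> n \<noteq> 0) \<and>
     (\<forall>n\<in>{a..b}. - \<psi> (n + 1) - \<psi> (n - 1) + d n * \<psi> n = E * \<psi> n)"

lemma shift_sum_le:
  fixes \<psi> :: "int \<Rightarrow> real" and a b :: int
  assumes zero: "\<forall>n. n \<notin> {a..b} \<longrightarrow> \<psi> n = 0" and A: "A \<subseteq> {a..b}" and s: "s = 1 \<or> s = -1"
  shows "(\<Sum>n\<in>A. \<bar>\<psi> (n + s)\<bar>) \<le> (\<Sum>n\<in>{a..b}. \<bar>\<psi> n\<bar>)"
proof -
  have "(\<Sum>n\<in>A. \<bar>\<psi> (n + s)\<bar>) = (\<Sum>m\<in>(\<lambda>n. n + s) ` A. \<bar>\<psi> m\<bar>)"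
    by (simp add: sum.reindex inj_on_def)
  also have "\<dots> = (\<Sum>m\<in>(\<lambda>n. n + s) ` A \<inter> {a..b}. \<bar>\<psi> m\<bar>)"
  proof (rule sum.mono_neutral_right)
    show "finite ((\<lambda>n. n + s) ` A)" using A finite_subset by blast
  qed (use zero in auto)
  also have "\<dots> \<le> (\<Sum>n\<in>{a..b}. \<bar>\<psi> n\<bar>)"
    by (rule sum_mono2) auto
  finally show ?thesis .
qed

lemma decay:
  fixes d \<psi> :: "int \<Rightarrow> real" and a b :: int and E \<Lambda> q :: real
  assumes ab: "a < 0" "0 < b" and ev: "jeig d a b E \<psi>" and norm: "(\<Sum>n=a..b. (\<psi> n)^2) = 1"
    and pos: "\<psi> 0 \<ge> 0" and L16: "16 \<le> \<Lambda>" and q: "0 < q" "q < 1" "8 < \<Lambda> * q"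
    and gap: "\<forall>n\<in>{a..b}. n \<noteq> 0 \<longrightarrow> \<Lambda> / 2 \<le> \<bar>d n - E\<bar>"
  shows "\<bar>E - d 0\<bar> \<le> 2" "\<forall>n\<in>{a..b}. n \<noteq> 0 \<longrightarrow> \<bar>\<psi> n\<bar> < q ^ nat \<bar>n\<bar>" "\<bar>\<psi> 0 - 1\<bar> < q"
proof -
  define A where "A = {a..b} - {0}"
  have zero: "\<forall>n. n \<notin> {a..b} \<longrightarrow> \<psi> n = 0" and eq: "\<forall>n\<in>{a..b}. - \<psi> (n + 1) - \<psi> (n - 1) + d n * \<psi> n = E * \<psi> n"
    using ev unfolding jeig_def by auto
  have finA: "finite A" unfolding A_def by simp
  have b1: "\<bar>\<psi> n\<bar> \<le> 1" for n
  proof (cases "n \<in> {a..b}")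
    case True
    have "(\<psi> n)^2 \<le> (\<Sum>n=a..b. (\<psi> n)^2)"
      using True by (intro member_le_sum) auto
    then have "(\<psi> n)^2 \<le> 1" using norm by simp
    then show ?thesis by (simp add: abs_square_le_1)
  next
    case False then show ?thesis using zero by simp
  qed
  have rel: "\<bar>\<psi> n\<bar> \<le> (2 / \<Lambda>) * (\<bar>\<psi> (n + 1)\<bar> + \<bar>\<psi> (n + -1)\<bar>)" if n: "n \<in> A" for n
  proof -
    have "(d n - E) * \<psi> n = \<psi> (n + 1) + \<psi> (n - 1)" using eq n unfolding A_def by (auto simp: algebra_simps)
    then have "\<bar>d n - E\<bar> * \<bar>\<psi> n\<bar> \<le> \<bar>\<psi> (n + 1)\<bar> + \<bar>\<psi> (n + -1)\<bar>"
      by (metis abs_mult abs_triangle_ineq diff_minus_eq_add diff_conv_add_uminus)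
    moreover have "\<Lambda> / 2 * \<bar>\<psi> n\<bar> \<le> \<bar>d n - E\<bar> * \<bar>\<psi> n\<bar>"
      using gap n unfolding A_def by (intro mult_right_mono) auto
    ultimately have "\<Lambda> / 2 * \<bar>\<psi> n\<bar> \<le> \<bar>\<psi> (n + 1)\<bar> + \<bar>\<psi> (n + -1)\<bar>" by linarith
    then show ?thesis using L16 by (simp add: field_simps)
  qed
  define W where "W = (\<Sum>n\<in>A. \<bar>\<psi> n\<bar>)"
  have W0: "0 \<le> W" unfolding W_def by (simp add: sum_nonneg)
  have tot: "(\<Sum>n\<in>{a..b}. \<bar>\<psi> n\<bar>) = W + \<bar>\<psi> 0\<bar>"
    unfolding W_def A_def using ab by (simp add: sum.remove[of "{a..b}" 0])
  have Asub: "A \<subseteq> {a..b}" unfolding A_def by auto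
  have sh1: "(\<Sum>n\<in>A. \<bar>\<psi> (n + 1)\<bar>) \<le> W + 1"
    using shift_sum_le[OF zero Asub, of 1] tot b1[of 0] by simp
  have sh2: "(\<Sum>n\<in>A. \<bar>\<psi> (n + -1)\<bar>) \<le> W + 1"
    using shift_sum_le[OF zero Asub, of "-1"] tot b1[of 0] by simp
  have "W \<le> (\<Sum>n\<in>A. (2 / \<Lambda>) * (\<bar>\<psi> (n + 1)\<bar> + \<bar>\<psi> (n + -1)\<bar>))"
    unfolding W_def by (rule sum_mono) (rule rel)
  also have "\<dots> = (2 / \<Lambda>) * ((\<Sum>n\<in>A. \<bar>\<psi> (n + 1)\<bar>) + (\<Sum>n\<in>A. \<bar>\<psi> (n + -1)\<bar>))"
    by (simp only: sum.distrib[symmetric] sum_distrib_left)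
  also have "\<dots> \<le> (2 / \<Lambda>) * (2 * W + 2)"
    using sh1 sh2 L16 by (intro mult_left_mono) auto
  finally have "W \<le> (2 / \<Lambda>) * (2 * W + 2)" .
  then have "\<Lambda> * W \<le> 4 * W + 4" using L16 by (simp add: field_simps)
  moreover have "W * (\<Lambda> / 2) \<le> W * (\<Lambda> - 4)" using L16 W0 by (intro mult_left_mono) auto
  ultimately have "W * \<Lambda> \<le> 8" by (simp add: algebra_simps)
  then have W8: "W \<le> 8 / \<Lambda>" using L16 by (simp add: field_simps)
  have "8 / \<Lambda> \<le> 1/2" using L16 by (simp add: field_simps)
  then have Wh: "W \<le> 1/2" using W8 by linarith
  have sq: "(\<Sum>n\<in>A. (\<psi> n)^2) \<le> W"
    unfolding W_def
  proof (rule sum_mono)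
    fix n
    have "(\<psi> n)^2 = \<bar>\<psi> n\<bar> * \<bar>\<psi> n\<bar>" by (simp add: power2_eq_square)
    also have "\<dots> \<le> 1 * \<bar>\<psi> n\<bar>" using b1[of n] by (intro mult_right_mono) auto
    finally show "(\<psi> n)^2 \<le> \<bar>\<psi> n\<bar>" by simp
  qed
  have "1 = (\<psi> 0)^2 + (\<Sum>n\<in>A. (\<psi> n)^2)"
    using norm ab unfolding A_def by (simp add: sum.remove[of "{a..b}" 0])
  then have p0: "(\<psi> 0)^2 \<ge> 1 - W" using sq by linarith
  have p1: "\<psi> 0 \<le> 1" using b1[of 0] by simp
  have p2: "(\<psi> 0)^2 \<le> \<psi> 0" using p1 pos by (simp add: power2_eq_square mult_left_le_one_le)
  have psi0: "1 - \<psi> 0 \<le> W" using p0 p2 by linarith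
  show "\<bar>\<psi> 0 - 1\<bar> < q"
  proof -
    have "8 / \<Lambda> < q" using q L16 by (simp add: field_simps)
    then show ?thesis using psi0 W8 p1 by simp
  qed
  have half: "\<psi> 0 \<ge> 1/2" using psi0 Wh by linarith
  show "\<bar>E - d 0\<bar> \<le> 2"
  proof -
    have "(d 0 - E) * \<psi> 0 = \<psi> 1 + \<psi> (-1)" using eq ab by (auto simp: algebra_simps)
    then have "\<bar>d 0 - E\<bar> * \<psi> 0 \<le> \<bar>\<psi> 1\<bar> + \<bar>\<psi> (-1)\<bar>" using pos
      by (metis abs_mult abs_of_nonneg abs_triangle_ineq)
    also have "\<dots> = (\<Sum>n\<in>{1, -1}. \<bar>\<psi> n\<bar>)" by simp
    also have "\<dots> \<le> W" unfolding W_def A_def using ab by (intro sum_mono2) auto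
    finally have "\<bar>d 0 - E\<bar> * \<psi> 0 \<le> W" .
    moreover have "\<bar>d 0 - E\<bar> * (1/2) \<le> \<bar>d 0 - E\<bar> * \<psi> 0" using half by (intro mult_left_mono) auto
    ultimately have "\<bar>d 0 - E\<bar> * (1/2) \<le> W" by linarith
    then have "\<bar>d 0 - E\<bar> \<le> 2 * W" by simp
    also have "\<dots> \<le> 1" using Wh by simp
    finally show ?thesis by (simp add: abs_minus_commute)
  qed
  define f where "f n = \<bar>\<psi> n\<bar> / q ^ nat \<bar>n\<bar>" for n
  define Mx where "Mx = Max (f ` A)"
  have A1: "1 \<in> A" using ab unfolding A_def by auto
  then have Ane: "A \<noteq> {}" by auto
  have "Mx \<in> f ` A" unfolding Mx_def using finA Ane by (intro Max_in) auto
  then obtain n0 where n0: "n0 \<in> A" "Mx = f n0" by auto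
  have qpos: "\<And>k. q ^ k > 0" using q by simp
  have Mx_ge: "\<bar>\<psi> n\<bar> \<le> Mx * q ^ nat \<bar>n\<bar>" if "n \<in> A" for n
  proof -
    have "f n \<le> Mx" unfolding Mx_def using that finA by simp
    then show ?thesis unfolding f_def using qpos[of "nat \<bar>n\<bar>"] by (simp add: field_simps)
  qed
  have Mx0: "0 \<le> Mx" using n0 qpos[of "nat \<bar>n0\<bar>"] unfolding f_def by simp
  define K where "K = nat \<bar>n0\<bar>"
  have K1: "1 \<le> K" using n0 unfolding K_def A_def by auto
  have nb: "\<bar>\<psi> s\<bar> \<le> max Mx 1 * q ^ (K - 1)" if s: "s = n0 + 1 \<or> s = n0 + -1" for s
  proof (cases "s = 0")
    case True
    then have "K = 1" using s unfolding K_def by auto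
    then show ?thesis using b1[of s] by simp
  next
    case False
    show ?thesis
    proof (cases "s \<in> {a..b}")
      case False
      then show ?thesis using zero qpos[of "K - 1"] by (simp add: zero_le_mult_iff)
    next
      case True
      then have sA: "s \<in> A" using \<open>s \<noteq> 0\<close> unfolding A_def by simp
      have "nat \<bar>s\<bar> \<ge> K - 1" using s unfolding K_def by auto
      then have "q ^ nat \<bar>s\<bar> \<le> q ^ (K - 1)" using q by (intro power_decreasing) auto
      then have "Mx * q ^ nat \<bar>s\<bar> \<le> max Mx 1 * q ^ (K - 1)"
        using Mx0 qpos[of "nat \<bar>s\<bar>"] by (intro mult_mono) auto
      then show ?thesis using Mx_ge[OF sA] by linarith
    qed
  qed
  have "Mx * q ^ K = \<bar>\<psi> n0\<bar>" using n0 qpos[of K] q(1) unfolding f_def K_def by (simp add: field_simps)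
  also have "\<dots> \<le> (2 / \<Lambda>) * (\<bar>\<psi> (n0 + 1)\<bar> + \<bar>\<psi> (n0 + -1)\<bar>)" using rel n0 by simp
  also have "\<dots> \<le> (2 / \<Lambda>) * (2 * (max Mx 1 * q ^ (K - 1)))"
    using nb[of "n0 + 1"] nb[of "n0 + -1"] L16 by (intro mult_left_mono) auto
  finally have f1: "Mx * q ^ K \<le> (2 / \<Lambda>) * (2 * (max Mx 1 * q ^ (K - 1)))" .
  have "q ^ K = q * q ^ (K - 1)" using K1 by (metis Suc_diff_1 less_le_trans zero_less_one power_Suc)
  then have "Mx * q * q ^ (K - 1) \<le> (4 / \<Lambda>) * max Mx 1 * q ^ (K - 1)"
    using f1 by (simp add: algebra_simps)
  then have key: "Mx * q \<le> (4 / \<Lambda>) * max Mx 1"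
    using qpos[of "K - 1"] mult_right_le_imp_le[of "Mx * q" "q ^ (K - 1)" "(4 / \<Lambda>) * max Mx 1"] by simp
  have Mx1: "Mx < 1"
  proof (rule ccontr)
    assume "\<not> Mx < 1"
    then have "Mx * q \<le> (4 / \<Lambda>) * Mx" using key by simp
    then have "Mx * q \<le> Mx * (4 / \<Lambda>)" by (simp add: algebra_simps)
    then have "q \<le> 4 / \<Lambda>" using \<open>\<not> Mx < 1\<close> mult_left_le_imp_le[of Mx q "4 / \<Lambda>"] by simp
    then show False using q L16 by (simp add: field_simps)
  qed
  show "\<forall>n\<in>{a..b}. n \<noteq> 0 \<longrightarrow> \<bar>\<psi> n\<bar> < q ^ nat \<bar>n\<bar>"
  proof (intro ballI impI)
    fix n assume "n \<in> {a..b}" "n \<noteq> 0"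
    then have "n \<in> A" unfolding A_def by simp
    then have "\<bar>\<psi> n\<bar> \<le> Mx * q ^ nat \<bar>n\<bar>" by (rule Mx_ge)
    also have "\<dots> < q ^ nat \<bar>n\<bar>" using Mx1 qpos by simp
    finally show "\<bar>\<psi> n\<bar> < q ^ nat \<bar>n\<bar>" .
  qed
qed

lemma eig_iff:
  fixes d :: "int \<Rightarrow> real" and a b :: int
  assumes ab: "a \<le> b"
  defines "N \<equiv> nat (b - a + 1)" and "e \<equiv> (\<lambda>j. if j < nat (b - a + 1) then d (a + int j) else 0)"
  shows "(\<exists>\<psi>. jeig d a b E \<psi>) \<longleftrightarrow> poly (Qp e (Suc N)) E = 0"
proof
  assume "\<exists>\<psi>. jeig d a b E \<psi>"
  then obtain \<psi> where ev: "jeig d a b E \<psi>" by blast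
  have zero: "\<forall>n. n \<notin> {a..b} \<longrightarrow> \<psi> n = 0" and nz: "\<exists>n. \<psi> n \<noteq> 0"
    and eq: "\<forall>n\<in>{a..b}. - \<psi> (n + 1) - \<psi> (n - 1) + d n * \<psi> n = E * \<psi> n"
    using ev unfolding jeig_def by auto
  have claim: "i \<le> N \<Longrightarrow> \<psi> (a + int i) = \<psi> a * poly (Qp e (Suc i)) E \<and> \<psi> (a + int i - 1) = \<psi> a * poly (Qp e i) E" for i
  proof (induction i)
    case 0
    then show ?case using zero by simp
  next
    case (Suc i)
    then have iN: "i < N" by simp
    have n_in: "a + int i \<in> {a..b}" using iN ab unfolding N_def by auto
    have ei: "e i = d (a + int i)" using iN by (simp add: e_def N_def)
    have IH: "\<psi> (a + int i) = \<psi> a * poly (Qp e (Suc i)) E" "\<psi> (a + int i - 1) = \<psi> a * poly (Qp e i) E"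
      using Suc iN by auto
    have "\<psi> (a + int i + 1) = (d (a + int i) - E) * \<psi> (a + int i) - \<psi> (a + int i - 1)"
      using eq n_in by (auto simp: algebra_simps)
    also have "\<dots> = \<psi> a * ((e i - E) * poly (Qp e (Suc i)) E - poly (Qp e i) E)"
      using IH ei by (simp add: algebra_simps)
    also have "\<dots> = \<psi> a * poly (Qp e (Suc (Suc i))) E"
      using Qp_rec[of e i E] by simp
    finally have X: "\<psi> (a + int i + 1) = \<psi> a * poly (Qp e (Suc (Suc i))) E" .
    have e1: "a + int (Suc i) = a + int i + 1" "a + int (Suc i) - 1 = a + int i" by simp_all
    show ?case using X IH(1) e1 by metis
  qed
  have psiN: "\<psi> (a + int N) = 0" using zero unfolding N_def using ab by auto
  show "poly (Qp e (Suc N)) E = 0"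
  proof (rule ccontr)
    assume ne: "poly (Qp e (Suc N)) E \<noteq> 0"
    have "\<psi> a = 0" using claim[of N] psiN ne by simp
    then have "\<forall>n\<in>{a..b}. \<psi> n = 0"
    proof (intro ballI)
      fix n assume "\<psi> a = 0" "n \<in> {a..b}"
      then have "nat (n - a) \<le> N" "a + int (nat (n - a)) = n" unfolding N_def by auto
      then show "\<psi> n = 0" using claim[of "nat (n - a)"] \<open>\<psi> a = 0\<close> by simp
    qed
    then show False using zero nz by blast
  qed
next
  assume root: "poly (Qp e (Suc N)) E = 0"
  define \<phi> where "\<phi> n = (if n \<in> {a..b} then poly (Qp e (Suc (nat (n - a)))) E else 0)" for n
  have "jeig d a b E \<phi>"
    unfolding jeig_def
  proof (intro conjI ballI allI impI)
    show "\<And>n. n \<notin> {a..b} \<Longrightarrow> \<phi> n = 0" unfolding \<phi>_def by auto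
    show "\<exists>n. \<phi> n \<noteq> 0" by (rule exI[of _ a]) (use ab in \<open>simp add: \<phi>_def\<close>)
  next
    fix n assume n: "n \<in> {a..b}"
    define i where "i = nat (n - a)"
    have iN: "i < N" and ni: "n = a + int i" using n unfolding i_def N_def by auto
    have ei: "e i = d n" using iN ni by (simp add: e_def N_def)
    have p0: "\<phi> n = poly (Qp e (Suc i)) E" unfolding \<phi>_def i_def using n by simp
    have p1: "\<phi> (n + 1) = poly (Qp e (Suc (Suc i))) E"
    proof (cases "n + 1 \<le> b")
      case True
      then have "nat (n + 1 - a) = Suc i" using n unfolding i_def by auto
      then show ?thesis unfolding \<phi>_def using True n by simp
    next
      case False
      then have "Suc i = N" using n unfolding i_def N_def by auto
      then show ?thesis unfolding \<phi>_def using False root by auto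
    qed
    have p2: "\<phi> (n - 1) = poly (Qp e i) E"
    proof (cases "a \<le> n - 1")
      case True
      then have "Suc (nat (n - 1 - a)) = i" using n unfolding i_def by auto
      then show ?thesis unfolding \<phi>_def using True n by simp
    next
      case False
      then have "i = 0" using n unfolding i_def by auto
      then show ?thesis unfolding \<phi>_def using False by auto
    qed
    show "- \<phi> (n + 1) - \<phi> (n - 1) + d n * \<phi> n = E * \<phi> n"
      using p0 p1 p2 ei Qp_rec[of e i E] by (simp add: algebra_simps)
  qed
  then show "\<exists>\<psi>. jeig d a b E \<psi>" by blast
qed

lemma jeig_scale:
  assumes "jeig d a b E \<phi>" "c \<noteq> 0"
  shows "jeig d a b E (\<lambda>n. c * \<phi> n)"
proof -
  have eq: "\<forall>n\<in>{a..b}. - \<phi> (n + 1) - \<phi> (n - 1) + d n * \<phi> n = E * \<phi> n" using assms unfolding jeig_def by auto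
  have "\<forall>n\<in>{a..b}. - (c * \<phi> (n + 1)) - c * \<phi> (n - 1) + d n * (c * \<phi> n) = E * (c * \<phi> n)"
  proof
    fix n assume "n \<in> {a..b}"
    then have "c * (- \<phi> (n + 1) - \<phi> (n - 1) + d n * \<phi> n) = c * (E * \<phi> n)" using eq by simp
    then show "- (c * \<phi> (n + 1)) - c * \<phi> (n - 1) + d n * (c * \<phi> n) = E * (c * \<phi> n)"
      by (simp add: algebra_simps)
  qed
  then show ?thesis using assms unfolding jeig_def by auto
qed

lemma spectral:
  fixes d :: "int \<Rightarrow> real" and a b :: int and \<Lambda> q :: real
  assumes ab: "a < 0" "0 < b" and L16: "16 \<le> \<Lambda>" and q: "0 < q" "q < 1" "8 < \<Lambda> * q"
    and gap: "\<forall>n\<in>{a..b}. n \<noteq> 0 \<longrightarrow> 3 * \<Lambda> / 4 \<le> \<bar>d n - d 0\<bar>"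
  shows "\<exists>E \<psi>. jeig d a b E \<psi> \<and> (\<Sum>n=a..b. (\<psi> n)^2) = 1 \<and> \<bar>E - d 0\<bar> \<le> 2 \<and>
     (\<forall>n\<in>{a..b}. n \<noteq> 0 \<longrightarrow> \<bar>\<psi> n\<bar> < q ^ nat \<bar>n\<bar>) \<and> \<bar>\<psi> 0 - 1\<bar> < q \<and>
     card {n\<in>{a..b}. d n < d 0 - \<Lambda>/4} < nat (b - a + 1) \<and>
     sorted_list_of_set {E. \<exists>\<psi>. jeig d a b E \<psi>} ! card {n\<in>{a..b}. d n < d 0 - \<Lambda>/4} = E \<and>
     card {E. \<exists>\<psi>. jeig d a b E \<psi>} = nat (b - a + 1) \<and>
     (\<forall>j < nat (b - a + 1). j \<noteq> card {n\<in>{a..b}. d n < d 0 - \<Lambda>/4} \<longrightarrow>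
         \<Lambda>/8 \<le> \<bar>sorted_list_of_set {E. \<exists>\<psi>. jeig d a b E \<psi>} ! j - E\<bar>) \<and>
     (card {n\<in>{a..b}. d n < d 0 - \<Lambda>/4} = 0 \<longrightarrow>
        (\<forall>j < nat (b - a + 1). j \<noteq> 0 \<longrightarrow> \<Lambda>/8 \<le> sorted_list_of_set {E. \<exists>\<psi>. jeig d a b E \<psi>} ! j - E))"
proof -
  define N where "N = nat (b - a + 1)"
  define e where "e = (\<lambda>j. if j < nat (b - a + 1) then d (a + int j) else 0)"
  define Es where "Es = {E. \<exists>\<psi>. jeig d a b E \<psi>}"
  define k where "k = card {n\<in>{a..b}. d n < d 0 - \<Lambda>/4}"
  define E1 where "E1 = d 0 - \<Lambda>/4"
  define E2 where "E2 = d 0 + \<Lambda>/4"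
  define B where "B = (\<Sum>n\<in>{a..b}. \<bar>d n\<bar>)"
  have ab': "a \<le> b" using ab by simp
  have Es_eq: "Es = roots e N"
    unfolding Es_def roots_def using eig_iff[OF ab', of d] unfolding N_def e_def by simp
  have bnd: "\<forall>j. \<bar>e j\<bar> \<le> B"
  proof
    fix j
    show "\<bar>e j\<bar> \<le> B"
    proof (cases "j < N")
      case True
      then have "a + int j \<in> {a..b}" unfolding N_def by auto
      then have "\<bar>d (a + int j)\<bar> \<le> B" unfolding B_def by (intro member_le_sum) auto
      then show ?thesis using True unfolding e_def N_def by simp
    next
      case False
      then show ?thesis unfolding e_def N_def B_def by (simp add: sum_nonneg)
    qed
  qed
  have finEs: "finite Es" unfolding Es_eq by (rule roots_finite)
  have cardEs: "card Es = N" unfolding Es_eq by (rule roots_card[OF bnd])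
  have cnt_eq: "\<And>E'. cnt e N E' = card {r\<in>Es. r < E'}"
    unfolding Es_eq cnt_def roots_def by simp
  have idx_card: "\<And>E'. card {j. j < N \<and> e j < E'} = card {n\<in>{a..b}. d n < E'}"
  proof -
    fix E'
    have "{n\<in>{a..b}. d n < E'} = (\<lambda>j. a + int j) ` {j. j < N \<and> e j < E'}"
    proof (intro set_eqI iffI)
      fix n assume n: "n \<in> {n\<in>{a..b}. d n < E'}"
      then have "nat (n - a) < N" "a + int (nat (n - a)) = n" unfolding N_def by auto
      moreover have "e (nat (n - a)) = d n" using n unfolding e_def by auto
      ultimately show "n \<in> (\<lambda>j. a + int j) ` {j. j < N \<and> e j < E'}" using n
        by (metis (mono_tags, lifting) image_eqI mem_Collect_eq)
    next
      fix n assume "n \<in> (\<lambda>j. a + int j) ` {j. j < N \<and> e j < E'}"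
      then obtain j where j: "j < N" "e j < E'" "n = a + int j" by auto
      then show "n \<in> {n\<in>{a..b}. d n < E'}" unfolding e_def N_def by auto
    qed
    moreover have "inj_on (\<lambda>j. a + int j) {j. j < N \<and> e j < E'}" by (auto simp: inj_on_def)
    ultimately show "card {j. j < N \<and> e j < E'} = card {n\<in>{a..b}. d n < E'}" by (simp add: card_image)
  qed
  have dom_of: "\<And>E'. \<forall>n\<in>{a..b}. 2 \<le> \<bar>d n - E'\<bar> \<Longrightarrow> \<forall>j<N. 2 \<le> \<bar>e j - E'\<bar>"
  proof (intro allI impI)
    fix E' j assume h: "\<forall>n\<in>{a..b}. 2 \<le> \<bar>d n - E'\<bar>" and j: "j < N"
    then have "a + int j \<in> {a..b}" unfolding N_def by auto
    then show "2 \<le> \<bar>e j - E'\<bar>" using h j unfolding e_def N_def by auto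
  qed
  have count: "\<And>E'. \<forall>n\<in>{a..b}. 2 \<le> \<bar>d n - E'\<bar> \<Longrightarrow> card {r\<in>Es. r < E'} = card {n\<in>{a..b}. d n < E'}"
    using count_dominant[OF bnd dom_of] cnt_eq idx_card by metis
  have notroot: "\<And>E'. \<forall>n\<in>{a..b}. 2 \<le> \<bar>d n - E'\<bar> \<Longrightarrow> E' \<notin> Es"
  proof -
    fix E' assume "\<forall>n\<in>{a..b}. 2 \<le> \<bar>d n - E'\<bar>"
    then have "poly (Qp e (Suc N)) E' \<noteq> 0" using dominance[OF dom_of, of E' N] by simp
    then show "E' \<notin> Es" unfolding Es_eq roots_def by simp
  qed
  have dE1: "\<forall>n\<in>{a..b}. 2 \<le> \<bar>d n - E1\<bar>"
  proof
    fix n assume n: "n \<in> {a..b}"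
    show "2 \<le> \<bar>d n - E1\<bar>"
    proof (cases "n = 0")
      case True then show ?thesis using L16 unfolding E1_def by simp
    next
      case False then have "3 * \<Lambda> / 4 \<le> \<bar>d n - d 0\<bar>" using gap n by simp
      then show ?thesis using L16 unfolding E1_def by linarith
    qed
  qed
  have dE2: "\<forall>n\<in>{a..b}. 2 \<le> \<bar>d n - E2\<bar>"
  proof
    fix n assume n: "n \<in> {a..b}"
    show "2 \<le> \<bar>d n - E2\<bar>"
    proof (cases "n = 0")
      case True then show ?thesis using L16 unfolding E2_def by simp
    next
      case False then have "3 * \<Lambda> / 4 \<le> \<bar>d n - d 0\<bar>" using gap n by simp
      then show ?thesis using L16 unfolding E2_def by linarith
    qed
  qed
  have c1: "card {r\<in>Es. r < E1} = k" using count[OF dE1] unfolding k_def E1_def by simp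
  have set2: "{n\<in>{a..b}. d n < E2} = insert 0 {n\<in>{a..b}. d n < E1}"
  proof (intro set_eqI iffI)
    fix n assume n: "n \<in> {n\<in>{a..b}. d n < E2}"
    show "n \<in> insert 0 {n\<in>{a..b}. d n < E1}"
    proof (cases "n = 0")
      case False then have "3 * \<Lambda> / 4 \<le> \<bar>d n - d 0\<bar>" using gap n by simp
      then show ?thesis using n L16 unfolding E1_def E2_def by (auto simp: abs_real_def split: if_splits)
    qed simp
  next
    fix n assume "n \<in> insert 0 {n\<in>{a..b}. d n < E1}"
    then show "n \<in> {n\<in>{a..b}. d n < E2}" using ab L16 unfolding E1_def E2_def by auto
  qed
  have n0: "0 \<notin> {n\<in>{a..b}. d n < E1}" using L16 unfolding E1_def by simp
  have fin1: "finite {n\<in>{a..b}. d n < E1}" by (rule finite_subset[of _ "{a..b}"]) auto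
  have "card {n\<in>{a..b}. d n < E2} = Suc (card {n\<in>{a..b}. d n < E1})"
    unfolding set2 using card_insert_disjoint[OF fin1 n0] .
  then have c2: "card {r\<in>Es. r < E2} = Suc k"
    using count[OF dE2] c1 count[OF dE1] by simp
  define M where "M = {r\<in>Es. E1 \<le> r \<and> r < E2}"
  have "{r\<in>Es. r < E2} = {r\<in>Es. r < E1} \<union> M" unfolding M_def E1_def E2_def using L16 by auto
  moreover have "{r\<in>Es. r < E1} \<inter> M = {}" unfolding M_def by auto
  ultimately have "card {r\<in>Es. r < E2} = card {r\<in>Es. r < E1} + card M"
    using finEs by (simp add: card_Un_disjoint M_def)
  then have "card M = 1" using c1 c2 by simp
  then obtain E where ME: "M = {E}" by (rule card_1_singletonE)
  have EEs: "E \<in> Es" and E12: "E1 \<le> E" "E < E2" using ME unfolding M_def by auto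
  have E1n: "E1 \<notin> Es" using notroot[OF dE1] .
  have E2n: "E2 \<notin> Es" using notroot[OF dE2] .
  have other: "\<And>r. r \<in> Es \<Longrightarrow> r \<noteq> E \<Longrightarrow> r < E1 \<or> E2 < r"
  proof -
    fix r assume r: "r \<in> Es" "r \<noteq> E"
    then have "r \<notin> M" using ME by auto
    moreover have "r \<noteq> E2" using r E2n by auto
    ultimately show "r < E1 \<or> E2 < r" using r unfolding M_def by auto
  qed
  have "{r\<in>Es. r < E} = {r\<in>Es. r < E1}"
  proof (intro set_eqI iffI)
    fix r assume "r \<in> {r\<in>Es. r < E}"
    then show "r \<in> {r\<in>Es. r < E1}" using other[of r] E12 by force
  next
    fix r assume "r \<in> {r\<in>Es. r < E1}"
    then show "r \<in> {r\<in>Es. r < E}" using E12 by auto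
  qed
  then have cE: "card {r\<in>Es. r < E} = k" using c1 by simp
  have sortE: "sorted_list_of_set Es ! k = E" and kN: "k < N"
    using sorted_idx_of[OF finEs EEs] cE cardEs by auto
  obtain \<phi> where \<phi>: "jeig d a b E \<phi>" using EEs unfolding Es_def by blast
  define s where "s = (\<Sum>n=a..b. (\<phi> n)^2)"
  obtain n0 where n0: "\<phi> n0 \<noteq> 0" using \<phi> unfolding jeig_def by auto
  then have n0ab: "n0 \<in> {a..b}" using \<phi> unfolding jeig_def by auto
  have "(\<phi> n0)^2 \<le> s" unfolding s_def using n0ab by (intro member_le_sum) auto
  then have spos: "s > 0" using n0 by (smt (verit) zero_less_power2)
  define c where "c = (if \<phi> 0 \<ge> 0 then 1 else -1) / sqrt s"
  define \<psi> where "\<psi> n = c * \<phi> n" for n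
  have c0: "c \<noteq> 0" unfolding c_def using spos by simp
  have \<psi>ev: "jeig d a b E \<psi>" unfolding \<psi>_def by (rule jeig_scale[OF \<phi> c0])
  have c2s: "c^2 = 1 / s" unfolding c_def using spos by (simp add: power_divide)
  have \<psi>norm: "(\<Sum>n=a..b. (\<psi> n)^2) = 1"
  proof -
    have "(\<Sum>n=a..b. (\<psi> n)^2) = c^2 * s" unfolding \<psi>_def s_def by (simp add: power_mult_distrib sum_distrib_left)
    then show ?thesis using c2s spos by simp
  qed
  have \<psi>0: "\<psi> 0 \<ge> 0" unfolding \<psi>_def c_def using spos by (simp add: divide_nonneg_pos mult_nonpos_nonpos zero_le_mult_iff)
  have EE0: "\<bar>E - d 0\<bar> \<le> \<Lambda>/4" using E12 unfolding E1_def E2_def by (auto simp: abs_real_def)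
  have gap2: "\<forall>n\<in>{a..b}. n \<noteq> 0 \<longrightarrow> \<Lambda> / 2 \<le> \<bar>d n - E\<bar>"
  proof (intro ballI impI)
    fix n assume "n \<in> {a..b}" "n \<noteq> 0"
    then have "3 * \<Lambda> / 4 \<le> \<bar>d n - d 0\<bar>" using gap by simp
    then show "\<Lambda> / 2 \<le> \<bar>d n - E\<bar>" using EE0 by linarith
  qed
  note dec = decay[OF ab \<psi>ev \<psi>norm \<psi>0 L16 q gap2]
  have gapj: "\<Lambda>/8 \<le> \<bar>sorted_list_of_set Es ! j - E\<bar> \<and> (k = 0 \<longrightarrow> \<Lambda>/8 \<le> sorted_list_of_set Es ! j - E)"
    if j: "j < N" "j \<noteq> k" for j
  proof -
    define r where "r = sorted_list_of_set Es ! j"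
    have rEs: "r \<in> Es" unfolding r_def using sorted_idx(1)[OF finEs] j cardEs by simp
    have "r \<noteq> E"
    proof
      assume "r = E"
      then have "sorted_list_of_set Es ! j = sorted_list_of_set Es ! k" using sortE unfolding r_def by simp
      moreover have dist: "distinct (sorted_list_of_set Es)" by simp
      ultimately have "j = k" using nth_eq_iff_index_eq[OF dist, of j k] j kN cardEs by simp
      then show False using j by simp
    qed
    then have ro: "r < E1 \<or> E2 < r" using other rEs by simp
    have "\<bar>E - d 0\<bar> \<le> 2" using dec(1) .
    then have 1: "\<Lambda>/8 \<le> \<bar>r - E\<bar>" using ro L16 unfolding E1_def E2_def by auto
    have 2: "k = 0 \<longrightarrow> \<Lambda>/8 \<le> r - E"
    proof
      assume "k = 0"
      then have "{r\<in>Es. r < E1} = {}" using c1 finEs by simp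
      then have "E2 < r" using ro rEs by auto
      then show "\<Lambda>/8 \<le> r - E" using \<open>\<bar>E - d 0\<bar> \<le> 2\<close> L16 unfolding E2_def by auto
    qed
    show ?thesis using 1 2 unfolding r_def by simp
  qed
  show ?thesis
    apply (rule exI[of _ E], rule exI[of _ \<psi>])
    using \<psi>ev \<psi>norm dec sortE kN cardEs gapj unfolding Es_def[symmetric] k_def[symmetric] N_def[symmetric]
    by auto
qed

unbundle no fps_syntax

lemma V_shift_nat:
  assumes "torus_periodic V"
  shows "V (x + real n *\<^sub>R axis i 1) = V x"
proof (induction n arbitrary: x)
  case 0 then show ?case by simp
next
  case (Suc n)
  have "x + real (Suc n) *\<^sub>R axis i 1 = (x + real n *\<^sub>R axis i 1) + axis i 1"
    by (simp add: algebra_simps)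
  then have "V (x + real (Suc n) *\<^sub>R axis i 1) = V ((x + real n *\<^sub>R axis i 1) + axis i 1)" by (simp add: add.assoc)
  also have "\<dots> = V (x + real n *\<^sub>R axis i 1)" using assms unfolding torus_periodic_def by blast
  finally show ?case using Suc by simp
qed

lemma V_shift_int:
  assumes "torus_periodic V"
  shows "V (x + real_of_int k *\<^sub>R axis i 1) = V x"
proof (cases "k \<ge> 0")
  case True
  define n where "n = nat k"
  then have "k = int n" using True by simp
  then show ?thesis using V_shift_nat[OF assms] by simp
next
  case False
  define n where "n = nat (- k)"
  then have n: "k = - int n" using False by simp
  have "V x = V ((x - real n *\<^sub>R axis i 1) + real n *\<^sub>R axis i 1)" by simp
  also have "\<dots> = V (x - real n *\<^sub>R axis i 1)" by (rule V_shift_nat[OF assms])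
  finally show ?thesis using n by (simp add: algebra_simps)
qed

lemma V_shift_sum:
  fixes V :: "real^'d \<Rightarrow> real"
  assumes "torus_periodic V" "finite S"
  shows "V (x + (\<Sum>i\<in>S. real_of_int (m i) *\<^sub>R axis i 1)) = V x"
  using assms(2)
proof (induction S arbitrary: x rule: finite_induct)
  case empty then show ?case by simp
next
  case (insert j S)
  have "x + (\<Sum>i\<in>insert j S. real_of_int (m i) *\<^sub>R axis i 1)
      = (x + (\<Sum>i\<in>S. real_of_int (m i) *\<^sub>R axis i 1)) + real_of_int (m j) *\<^sub>R axis j 1"
    using insert by (simp add: algebra_simps)
  then have "V (x + (\<Sum>i\<in>insert j S. real_of_int (m i) *\<^sub>R axis i 1))
      = V ((x + (\<Sum>i\<in>S. real_of_int (m i) *\<^sub>R axis i 1)) + real_of_int (m j) *\<^sub>R axis j 1)" by (simp add: add.assoc)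
  also have "\<dots> = V (x + (\<Sum>i\<in>S. real_of_int (m i) *\<^sub>R axis i 1))" by (rule V_shift_int[OF assms(1)])
  finally show ?case using insert by simp
qed

lemma vec_int_expand:
  "(\<chi> i. real_of_int (m i)) = (\<Sum>i\<in>UNIV. real_of_int (m i) *\<^sub>R axis i (1::real) :: real^'d)"
proof -
  have "(\<chi> i. real_of_int (m i)) = (\<Sum>i\<in>UNIV. ((\<chi> i. real_of_int (m i)) :: real^'d) $ i *s axis i 1)"
    by (rule basis_expansion[symmetric])
  then show ?thesis by (simp add: scalar_mult_eq_scaleR)
qed

lemma V_int_periodic:
  fixes V :: "real^'d \<Rightarrow> real"
  assumes "torus_periodic V"
  shows "V (x + (\<chi> i. real_of_int (m i))) = V x"
  using V_shift_sum[OF assms, of UNIV x m] vec_int_expand[of m] by simp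

definition cvec :: "real^'d \<Rightarrow> complex^'d" where
  "cvec x = (\<chi> i. complex_of_real (x $ i))"

definition cpath :: "real^'d \<Rightarrow> real^'d \<Rightarrow> complex \<Rightarrow> complex^'d" where
  "cpath y v t = (\<chi> i. complex_of_real (y $ i) + t * complex_of_real (v $ i))"

lemma cpath_real: "cpath y v (complex_of_real s) = cvec (y + s *\<^sub>R v)"
  unfolding cpath_def cvec_def by (simp add: vec_eq_iff)

lemma cpath_Im: "Im (cpath y v t $ i) = Im t * v $ i"
  unfolding cpath_def by simp

lemma reim_lemma: "Re h *\<^sub>R c + Im h *\<^sub>R (\<i> * c) = c * (h::complex)"
  by (simp add: complex_eq_iff algebra_simps)

lemma cpath_eq: "cpath y v t = cvec y + Re t *\<^sub>R cvec v + Im t *\<^sub>R (\<chi> i. \<i> * cvec v $ i)"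
proof -
  have eq: "complex_of_real (y $ i) + t * complex_of_real (v $ i) =
        complex_of_real (y $ i) + Re t *\<^sub>R complex_of_real (v $ i) + Im t *\<^sub>R (\<i> * complex_of_real (v $ i))" for i
    using reim_lemma[of t "complex_of_real (v $ i)"] by (simp add: add.assoc mult.commute)
  show ?thesis unfolding vec_eq_iff
  proof (rule allI)
    fix i
    have "(cvec y + Re t *\<^sub>R cvec v + Im t *\<^sub>R (\<chi> i. \<i> * cvec v $ i)) $ i
       = complex_of_real (y $ i) + Re t *\<^sub>R complex_of_real (v $ i) + Im t *\<^sub>R (\<i> * complex_of_real (v $ i))"
      unfolding cvec_def by (simp only: vector_add_component vector_scaleR_component vec_lambda_beta)
    also have "\<dots> = cpath y v t $ i" unfolding cpath_def using eq[of i] by (simp only: vec_lambda_beta)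
    finally show "cpath y v t $ i = (cvec y + Re t *\<^sub>R cvec v + Im t *\<^sub>R (\<chi> i. \<i> * cvec v $ i)) $ i" by simp
  qed
qed

lemma cpath_deriv:
  fixes Vc :: "complex^'d \<Rightarrow> complex"
  assumes L: "(Vc has_derivative L) (at (cpath y v t))" and Li: "\<forall>w. L (\<chi> i. \<i> * w $ i) = \<i> * L w"
  shows "((\<lambda>t. Vc (cpath y v t)) has_field_derivative L (cvec v)) (at t)"
proof -
  let ?w = "cvec v" and ?iw = "(\<chi> i. \<i> * cvec v $ i) :: complex^'d"
  have p: "((\<lambda>t. cpath y v t) has_derivative (\<lambda>h. Re h *\<^sub>R ?w + Im h *\<^sub>R ?iw)) (at t)"
    unfolding cpath_eq by (auto intro!: derivative_eq_intros bounded_linear.has_derivative[OF bounded_linear_Re] bounded_linear.has_derivative[OF bounded_linear_Im])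
  have c: "((\<lambda>t. Vc (cpath y v t)) has_derivative (\<lambda>h. L (Re h *\<^sub>R ?w + Im h *\<^sub>R ?iw))) (at t)"
    using has_derivative_compose[OF p L] by (simp add: o_def)
  have lin: "linear L" using L by (simp add: has_derivative_linear)
  have "L (Re h *\<^sub>R ?w + Im h *\<^sub>R ?iw) = L ?w * h" for h
  proof -
    have "L (Re h *\<^sub>R ?w + Im h *\<^sub>R ?iw) = Re h *\<^sub>R L ?w + Im h *\<^sub>R L ?iw"
      using lin by (simp add: linear_add linear_scale)
    also have "\<dots> = Re h *\<^sub>R L ?w + Im h *\<^sub>R (\<i> * L ?w)" using Li by simp
    also have "\<dots> = L ?w * h" by (rule reim_lemma)
    finally show ?thesis .
  qed
  then have eq: "(\<lambda>h. L (Re h *\<^sub>R ?w + Im h *\<^sub>R ?iw)) = (*) (L ?w)" by (auto simp: mult.commute)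
  show ?thesis unfolding has_field_derivative_def using c[unfolded eq] .
qed

lemma cpath_holo:
  fixes Vc :: "complex^'d \<Rightarrow> complex"
  assumes holo: "holo_on (strip r) Vc" and S: "open S" and inS: "\<And>t. t \<in> S \<Longrightarrow> cpath y v t \<in> strip r"
  shows "(\<lambda>t. Vc (cpath y v t)) holomorphic_on S"
proof -
  have "\<forall>t\<in>S. (\<lambda>t. Vc (cpath y v t)) field_differentiable (at t)"
  proof
    fix t assume "t \<in> S"
    then obtain L where "(Vc has_derivative L) (at (cpath y v t))" "\<forall>w. L (\<chi> i. \<i> * w $ i) = \<i> * L w"
      using holo inS unfolding holo_on_def by blast
    then show "(\<lambda>t. Vc (cpath y v t)) field_differentiable (at t)"
      using cpath_deriv field_differentiable_def by blast
  qed
  then show ?thesis using S by (simp add: holomorphic_on_open field_differentiable_def)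
qed

lemma cvec_add: "cvec (x + y) = cvec x + cvec y"
  unfolding cvec_def by (simp add: vec_eq_iff)

lemma ext_cvec: "analytic_ext r V Vc \<Longrightarrow> Vc (cvec x) = complex_of_real (V x)"
  unfolding analytic_ext_def cvec_def by simp

lemma Vc_periodic:
  fixes Vc :: "complex^'d \<Rightarrow> complex" and V :: "real^'d \<Rightarrow> real"
  assumes per: "torus_periodic V" and ext: "analytic_ext r V Vc" and r: "0 < r" and z: "z \<in> strip r"
  shows "Vc (z + cvec (\<chi> i. real_of_int (m i))) = Vc z"
proof -
  have holo: "holo_on (strip r) Vc" using ext unfolding analytic_ext_def by simp
  define y :: "real^'d" where "y = (\<chi> i. Re (z $ i))"
  define v :: "real^'d" where "v = (\<chi> i. Im (z $ i))"
  define mv :: "real^'d" where "mv = (\<chi> i. real_of_int (m i))"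
  define \<mu> where "\<mu> = Max (range (\<lambda>i. \<bar>v $ i\<bar>))"
  have finr: "finite (range (\<lambda>i. \<bar>v $ i\<bar>))" by simp
  have vle: "\<bar>v $ i\<bar> \<le> \<mu>" for i unfolding \<mu>_def using finr by (intro Max_ge) auto
  have "\<mu> \<in> range (\<lambda>i. \<bar>v $ i\<bar>)" unfolding \<mu>_def using finr by (intro Max_in) auto
  then obtain i0 where "\<mu> = \<bar>v $ i0\<bar>" by auto
  then have \<mu>r: "\<mu> < r" using z unfolding strip_def v_def by simp
  have \<mu>0: "0 \<le> \<mu>" using vle[of i0] by simp
  define R where "R = 2 * r / (r + \<mu>)"
  have R1: "1 < R" unfolding R_def using \<mu>r \<mu>0 r by (simp add: field_simps)
  have Rmu: "R * \<mu> < r" unfolding R_def using \<mu>r \<mu>0 r by (simp add: field_simps)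
  define S where "S = ball (0::complex) R"
  have inS: "cpath w v t \<in> strip r" if t: "t \<in> S" for w t
  proof -
    have "\<bar>Im t\<bar> < R" using t abs_Im_le_cmod[of t] unfolding S_def by (simp add: dist_norm) 
    then have b: "\<bar>Im t\<bar> * \<bar>v $ i\<bar> \<le> R * \<mu>" for i using vle[of i] \<mu>0 by (intro mult_mono) auto
    have "\<bar>Im (cpath w v t $ i)\<bar> < r" for i using Rmu b[of i] by (simp add: cpath_Im abs_mult)
    then show ?thesis unfolding strip_def by simp
  qed
  define g where "g t = Vc (cpath (y + mv) v t) - Vc (cpath y v t)" for t
  have hg: "g holomorphic_on S" unfolding g_def
    by (intro holomorphic_on_diff cpath_holo[OF holo] inS) (auto simp: S_def)
  define U where "U = {t\<in>S. Im t = 0}"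
  have lim: "0 islimpt U"
    unfolding islimpt_approachable
  proof (intro allI impI)
    fix \<epsilon> :: real assume e: "\<epsilon> > 0"
    define s where "s = min (\<epsilon> / 2) (R / 2)"
    have s: "0 < s" "s < \<epsilon>" "s < R" unfolding s_def using e R1 by auto
    show "\<exists>x'\<in>U. x' \<noteq> 0 \<and> dist x' 0 < \<epsilon>"
      by (rule bexI[of _ "complex_of_real s"]) (use s in \<open>auto simp: U_def S_def\<close>)
  qed
  have gU: "g t = 0" if "t \<in> U" for t
  proof -
    have t: "t = complex_of_real (Re t)" using that unfolding U_def by (simp add: complex_eq_iff)
    have "g t = Vc (cvec (y + mv + Re t *\<^sub>R v)) - Vc (cvec (y + Re t *\<^sub>R v))"
      unfolding g_def by (subst t, subst t, simp only: cpath_real)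
    also have "\<dots> = complex_of_real (V (y + Re t *\<^sub>R v + mv)) - complex_of_real (V (y + Re t *\<^sub>R v))"
      using ext_cvec[OF ext] by (simp add: algebra_simps)
    also have "\<dots> = 0" using V_int_periodic[OF per, of "y + Re t *\<^sub>R v" m] unfolding mv_def by simp
    finally show ?thesis .
  qed
  have "g \<i> = 0"
    by (rule analytic_continuation[OF hg _ _ _ _ lim gU])
       (use R1 in \<open>auto simp: S_def U_def intro: convex_connected\<close>)
  moreover have "cpath y v \<i> = z"
    unfolding cpath_def y_def v_def by (simp add: vec_eq_iff complex_eq_iff)
  moreover have "cpath (y + mv) v \<i> = z + cvec mv"
    unfolding cpath_def y_def v_def cvec_def by (simp add: vec_eq_iff complex_eq_iff)
  ultimately show ?thesis unfolding g_def mv_def by simp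
qed

lemma Vc_bounded:
  fixes Vc :: "complex^'d \<Rightarrow> complex" and V :: "real^'d \<Rightarrow> real"
  assumes per: "torus_periodic V" and ext: "analytic_ext r V Vc" and r: "0 < r"
  shows "bdd_above ((\<lambda>z. cmod (Vc z)) ` strip (3 * r / 4))"
proof -
  have holo: "holo_on (strip r) Vc" using ext unfolding analytic_ext_def by simp
  define C where "C = {c::complex. 0 \<le> Re c \<and> Re c \<le> 1 \<and> \<bar>Im c\<bar> \<le> 3 * r / 4}"
  define K where "K = {z::complex^'d. \<forall>i. z $ i \<in> C}"
  have Kc: "K = (\<Inter>i. (\<lambda>z. z $ i) -` C)" unfolding K_def by auto
  have closedC: "closed C"
  proof -
    have eqC: "C = {c. 0 \<le> Re c} \<inter> {c. Re c \<le> 1} \<inter> ({c. Im c \<le> 3 * r / 4} \<inter> {c. - (3 * r / 4) \<le> Im c})"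
      unfolding C_def by auto
    show ?thesis unfolding eqC
      by (intro closed_Int closed_halfspace_Re_ge closed_halfspace_Re_le closed_halfspace_Im_le closed_halfspace_Im_ge)
  qed
  have closedK: "closed K" unfolding Kc
    by (intro closed_INT ballI continuous_closed_vimage[OF closedC]) (simp add: bounded_linear_vec_nth bounded_linear.isCont)
  have bK: "norm z \<le> CARD('d) * (1 + r)" if "z \<in> K" for z
  proof -
    have c: "norm (z $ i) \<le> 1 + r" for i
    proof -
      have "z $ i \<in> C" using that unfolding K_def by simp
      then have "\<bar>Re (z $ i)\<bar> \<le> 1" "\<bar>Im (z $ i)\<bar> \<le> r" using r unfolding C_def by auto
      then show ?thesis using cmod_le[of "z $ i"] by simp
    qed
    have "norm z = L2_set (\<lambda>i. norm (z $ i)) UNIV" by (simp add: norm_vec_def)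
    also have "\<dots> \<le> (\<Sum>i\<in>UNIV. norm (z $ i))" by (rule L2_set_le_sum) simp
    also have "\<dots> \<le> (\<Sum>i\<in>(UNIV::'d set). 1 + r)" by (rule sum_mono) (rule c)
    finally show ?thesis by simp
  qed
  have compK: "compact K" unfolding compact_eq_bounded_closed
    using closedK bK by (auto simp: bounded_iff)
  have Kstrip: "K \<subseteq> strip r"
  proof
    fix z assume "z \<in> K"
    then have b: "\<bar>Im (z $ i)\<bar> \<le> 3 * r / 4" for i unfolding K_def C_def by auto
    have "\<bar>Im (z $ i)\<bar> < r" for i using r b[of i] by linarith
    then show "z \<in> strip r" unfolding strip_def by simp
  qed
  have cont: "continuous_on K Vc"
  proof (rule continuous_at_imp_continuous_on, rule ballI)
    fix z assume "z \<in> K"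
    then have "z \<in> strip r" using Kstrip by auto
    then obtain L where "(Vc has_derivative L) (at z)" using holo unfolding holo_on_def by blast
    then show "isCont Vc z" by (rule has_derivative_continuous)
  qed
  have "compact (Vc ` K)" by (rule compact_continuous_image[OF cont compK])
  then have "bounded (Vc ` K)" by (rule compact_imp_bounded)
  then obtain B where B0: "\<forall>x\<in>Vc ` K. norm x \<le> B" unfolding bounded_iff by blast
  have B: "\<And>z. z \<in> K \<Longrightarrow> norm (Vc z) \<le> B" using B0 by simp
  have "cmod (Vc z) \<le> B" if z: "z \<in> strip (3 * r / 4)" for z
  proof -
    define m where "m i = floor (Re (z $ i))" for i
    define z' where "z' = z - cvec (\<chi> i. real_of_int (m i))"
    have z'K: "z' \<in> K"
    proof -
      have "z' $ i \<in> C" for i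
      proof -
        have "Re (z' $ i) = Re (z $ i) - of_int (m i)" "Im (z' $ i) = Im (z $ i)"
          unfolding z'_def cvec_def by simp_all
        moreover have "of_int (m i) \<le> Re (z $ i)" "Re (z $ i) < of_int (m i) + 1" unfolding m_def by linarith+
        moreover have "\<bar>Im (z $ i)\<bar> < 3 * r / 4" using z unfolding strip_def by simp
        ultimately show ?thesis unfolding C_def by simp
      qed
      then show ?thesis unfolding K_def by simp
    qed
    then have "z' \<in> strip r" using Kstrip by auto
    then have "Vc (z' + cvec (\<chi> i. real_of_int (m i))) = Vc z'" by (rule Vc_periodic[OF per ext r])
    then have "Vc z = Vc z'" unfolding z'_def by simp
    then show ?thesis using B[OF z'K] by simp
  qed
  then show ?thesis by (auto simp: bdd_above_def)
qed

lemma Vc_le_sup: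
  fixes Vc :: "complex^'d \<Rightarrow> complex" and V :: "real^'d \<Rightarrow> real"
  assumes per: "torus_periodic V" and ext: "analytic_ext r V Vc" and r: "0 < r" and z: "z \<in> strip (3 * r / 4)"
  shows "cmod (Vc z) \<le> sup_norm_strip r Vc"
  unfolding sup_norm_strip_def using Vc_bounded[OF per ext r] z by (intro cSup_upper) auto

lemma V_lip:
  fixes Vc :: "complex^'d \<Rightarrow> complex" and V :: "real^'d \<Rightarrow> real" and h y :: "real^'d"
  assumes per: "torus_periodic V" and ext: "analytic_ext r V Vc" and r: "0 < r"
    and eta: "0 < \<eta>" and h: "\<forall>i. \<bar>h $ i\<bar> \<le> \<eta>"
  shows "\<bar>V (y + h) - V y\<bar> \<le> 2 * sup_norm_strip r Vc * \<eta> / r"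
proof -
  define M where "M = sup_norm_strip r Vc"
  have holo: "holo_on (strip r) Vc" using ext unfolding analytic_ext_def by simp
  define v where "v = (1 / \<eta>) *\<^sub>R h"
  have v1: "\<bar>v $ i\<bar> \<le> 1" for i using h eta unfolding v_def by (simp add: field_simps)
  define g where "g t = Vc (cpath y v t)" for t
  define S where "S = {t::complex. Im t < r} \<inter> {t. - r < Im t}"
  have openS: "open S" unfolding S_def by (intro open_Int open_halfspace_Im_lt open_halfspace_Im_gt)
  have Im_bound: "\<bar>Im (cpath y v t $ i)\<bar> \<le> \<bar>Im t\<bar>" for t i
    using v1[of i] by (simp add: cpath_Im abs_mult mult_left_le)
  have inS: "cpath y v t \<in> strip r" if "t \<in> S" for t
  proof -
    have "\<bar>Im t\<bar> < r" using that unfolding S_def by auto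
    then show ?thesis using Im_bound unfolding strip_def by (auto intro: le_less_trans)
  qed
  have hg: "g holomorphic_on S" unfolding g_def by (rule cpath_holo[OF holo openS inS])
  have contS: "continuous_on S g" using hg by (rule holomorphic_on_imp_continuous_on)
  have dbound: "cmod (deriv g \<zeta>) \<le> 2 * M / r" if z: "Im \<zeta> = 0" for \<zeta>
  proof -
    have cb: "cball \<zeta> (r/2) \<subseteq> S"
    proof
      fix x assume "x \<in> cball \<zeta> (r/2)"
      then have "cmod (\<zeta> - x) \<le> r/2" by (simp add: dist_norm)
      moreover have "\<bar>Im x\<bar> \<le> cmod (\<zeta> - x)" using abs_Im_le_cmod[of "\<zeta> - x"] z by simp
      ultimately show "x \<in> S" unfolding S_def using r by auto
    qed
    have "cmod ((deriv ^^ 1) g \<zeta>) \<le> fact 1 * M / (r/2) ^ 1"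
    proof (rule Cauchy_inequality)
      show "g holomorphic_on ball \<zeta> (r / 2)" using hg cb ball_subset_cball by (blast intro: holomorphic_on_subset)
      show "continuous_on (cball \<zeta> (r / 2)) g" using contS cb by (rule continuous_on_subset)
      show "0 < r / 2" using r by simp
      fix x assume x: "cmod (\<zeta> - x) = r / 2"
      have "\<bar>Im x\<bar> \<le> cmod (\<zeta> - x)" using abs_Im_le_cmod[of "\<zeta> - x"] z by simp
      then have "\<bar>Im x\<bar> \<le> r / 2" using x by simp
      then have "\<bar>Im (cpath y v x $ i)\<bar> < 3 * r / 4" for i using Im_bound[of x i] r by linarith
      then have "cpath y v x \<in> strip (3 * r / 4)" unfolding strip_def by simp
      then show "cmod (g x) \<le> M" unfolding g_def M_def by (rule Vc_le_sup[OF per ext r])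
    qed
    then show ?thesis by (simp add: mult.commute)
  qed
  define T where "T = closed_segment 0 (complex_of_real \<eta>)"
  have T_real: "Im \<zeta> = 0" if "\<zeta> \<in> T" for \<zeta> using that unfolding T_def by (auto simp: in_segment)
  have TS: "T \<subseteq> S" using T_real r unfolding S_def by auto
  have "cmod (g (complex_of_real \<eta>) - g 0) \<le> 2 * M / r * cmod (complex_of_real \<eta> - 0)"
  proof (rule field_differentiable_bound[of T g "deriv g"])
    show "convex T" unfolding T_def by (rule convex_closed_segment)
    show "\<And>z. z \<in> T \<Longrightarrow> (g has_field_derivative deriv g z) (at z within T)"
      using holomorphic_derivI[OF hg openS] TS by blast
    show "\<And>z. z \<in> T \<Longrightarrow> cmod (deriv g z) \<le> 2 * M / r" using dbound T_real by blast
    show "complex_of_real \<eta> \<in> T" "0 \<in> T" unfolding T_def by auto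
  qed
  moreover have "g (complex_of_real \<eta>) = complex_of_real (V (y + h))"
    unfolding g_def cpath_real ext_cvec[OF ext] v_def using eta by simp
  moreover have "g 0 = complex_of_real (V y)"
    using cpath_real[of y v 0] ext_cvec[OF ext, of y] unfolding g_def by simp
  ultimately have "\<bar>V (y + h) - V y\<bar> \<le> 2 * M / r * \<eta>" using eta
    by (simp flip: of_real_diff)
  then show ?thesis unfolding M_def by simp
qed

lemma torus_lip:
  fixes Vc :: "complex^'d \<Rightarrow> complex" and V :: "real^'d \<Rightarrow> real" and x x0 w :: "real^'d"
  assumes per: "torus_periodic V" and ext: "analytic_ext r V Vc" and r: "0 < r"
    and dist: "torus_dist x x0 < \<eta>"
  shows "\<bar>V (x + w) - V (x0 + w)\<bar> \<le> 2 * sup_norm_strip r Vc * \<eta> / r"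
proof -
  define D where "D = x - x0"
  define mm where "mm i = round (D $ i)" for i
  define h :: "real^'d" where "h = (\<chi> i. D $ i - real_of_int (mm i))"
  have hb: "\<bar>h $ i\<bar> \<le> torus_dist x x0" for i
  proof -
    have "\<bar>h $ i\<bar> = \<bar>(x $ i - x0 $ i) - real_of_int (round (x $ i - x0 $ i))\<bar>"
      unfolding h_def mm_def D_def by simp
    also have "\<dots> \<le> torus_dist x x0" unfolding torus_dist_def by (rule Max_ge) auto
    finally show ?thesis .
  qed
  have eta: "0 < \<eta>" using hb[of undefined] dist by (smt (verit) abs_ge_zero)
  have hb': "\<forall>i. \<bar>h $ i\<bar> \<le> \<eta>"
  proof
    fix i show "\<bar>h $ i\<bar> \<le> \<eta>" using hb[of i] dist by linarith
  qed
  have e: "x + w = (x0 + w + h) + (\<chi> i. real_of_int (mm i))"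
    unfolding h_def D_def by (simp add: vec_eq_iff)
  have "V (x + w) = V ((x0 + w + h) + (\<chi> i. real_of_int (mm i)))" unfolding e by (rule refl)
  also have "\<dots> = V (x0 + w + h)" by (rule V_int_periodic[OF per])
  finally have "V (x + w) = V (x0 + w + h)" .
  then show ?thesis using V_lip[OF per ext r eta hb', of "x0 + w"] by simp
qed

lemma M_bounds:
  fixes Vc :: "complex^'d \<Rightarrow> complex" and V :: "real^'d \<Rightarrow> real"
  assumes per: "torus_periodic V" and ext: "analytic_ext r V Vc" and r: "0 < r"
  shows "0 \<le> sup_norm_strip r Vc" "sup_norm_strip r Vc \<le> exp (T_V r V Vc)" "2 \<le> T_V r V Vc"
proof -
  have "0 \<in> strip (3 * r / 4)" unfolding strip_def using r by simp
  then have "cmod (Vc 0) \<le> sup_norm_strip r Vc" by (rule Vc_le_sup[OF per ext r])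
  then show M0: "0 \<le> sup_norm_strip r Vc" by (meson norm_ge_zero order_trans)
  show "2 \<le> T_V r V Vc" unfolding T_V_def by simp
  show "sup_norm_strip r Vc \<le> exp (T_V r V Vc)"
  proof (cases "sup_norm_strip r Vc = 0")
    case True then show ?thesis by simp
  next
    case False
    then have pos: "0 < sup_norm_strip r Vc" using M0 by simp
    have "ln (sup_norm_strip r Vc) \<le> T_V r V Vc" unfolding T_V_def by simp
    then show ?thesis using pos by (metis exp_le_cancel_iff exp_ln)
  qed
qed

lemma consts_choice:
  fixes \<rho> \<epsilon> :: real
  assumes r: "0 < \<rho>" "\<rho> \<le> 1" and e: "0 < \<epsilon>" "\<epsilon> < 1"
  shows "\<exists>C\<ge>0. \<forall>T L. 2 \<le> T \<longrightarrow> T powr C \<le> L \<longrightarrow>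
           0 < L \<and> L powr \<epsilon> \<le> L / 2 - 4 \<and> T + ln (16 / \<rho>) \<le> 2 * L powr \<epsilon>"
proof -
  define K where "K = ln (16 / \<rho>)"
  have K0: "0 < K" unfolding K_def using r by (simp add: field_simps)
  define s where "s = 1 + log 2 (1 + K)"
  have s1: "2 powr (s - 1) = 1 + K" unfolding s_def using K0 by simp
  have s0: "0 \<le> s - 1" unfolding s_def using K0 by simp
  define L0 where "L0 = max 16 (4 powr (1 / (1 - \<epsilon>)))"
  have L0pos: "0 < L0" unfolding L0_def by simp
  define C where "C = max (s / \<epsilon>) (log 2 L0)"
  have C0: "0 \<le> C" unfolding C_def using s0 e by (simp add: le_max_iff_disj)
  have Ce: "s \<le> C * \<epsilon>" unfolding C_def using e by (simp add: field_simps max_def)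
  have CL0: "log 2 L0 \<le> C" unfolding C_def by simp
  show ?thesis
  proof (intro exI[of _ C] conjI C0 allI impI)
    fix T L :: real assume T: "2 \<le> T" and TL: "T powr C \<le> L"
    have "2 powr C \<le> T powr C" using T C0 by (intro powr_mono2) auto
    moreover have "L0 \<le> 2 powr C"
    proof -
      have "L0 = 2 powr (log 2 L0)" using L0pos by simp
      also have "\<dots> \<le> 2 powr C" using CL0 by (intro powr_mono) auto
      finally show ?thesis .
    qed
    ultimately have LL0: "L0 \<le> L" using TL by linarith
    then have L16: "16 \<le> L" and L4: "4 powr (1 / (1 - \<epsilon>)) \<le> L" unfolding L0_def by auto
    then show Lpos: "0 < L" by simp
    have "4 = (4 powr (1 / (1 - \<epsilon>))) powr (1 - \<epsilon>)" using e by (simp add: powr_powr)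
    also have "\<dots> \<le> L powr (1 - \<epsilon>)" using L4 e by (intro powr_mono2) auto
    finally have a: "4 \<le> L powr (1 - \<epsilon>)" .
    have "L = L powr \<epsilon> * L powr (1 - \<epsilon>)" using Lpos by (simp add: powr_add[symmetric])
    moreover have "L powr \<epsilon> * 4 \<le> L powr \<epsilon> * L powr (1 - \<epsilon>)" using a by (intro mult_left_mono) auto
    ultimately have "L powr \<epsilon> \<le> L / 4" by linarith
    then show "L powr \<epsilon> \<le> L / 2 - 4" using L16 by linarith
    have "T powr s \<le> T powr (C * \<epsilon>)" using Ce T by (intro powr_mono) auto
    also have "\<dots> = (T powr C) powr \<epsilon>" using T by (simp add: powr_powr)
    also have "\<dots> \<le> L powr \<epsilon>" using TL e by (intro powr_mono2) auto
    finally have b: "T powr s \<le> L powr \<epsilon>" .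
    have "T powr s = T powr (1 + (s - 1))" by simp
    also have "\<dots> = T powr 1 * T powr (s - 1)" by (rule powr_add)
    also have "\<dots> = T * T powr (s - 1)" using T by simp
    finally have "T powr s = T * T powr (s - 1)" .
    also have "T * T powr (s - 1) \<ge> T * 2 powr (s - 1)" using T s0 by (intro mult_left_mono powr_mono2) auto
    ultimately have "T * (1 + K) \<le> T powr s" using s1 by simp
    moreover have "T + K \<le> T * (1 + K)" using T K0 by (simp add: algebra_simps)
    ultimately show "T + ln (16 / \<rho>) \<le> 2 * L powr \<epsilon>" using b K0 powr_ge_zero[of L \<epsilon>] unfolding K_def by linarith
  qed
qed

lemma exp4: "16 \<le> exp (4::real)"
proof -
  have "exp (real 4 * 1) = exp (1::real) ^ 4" by (rule exp_of_nat_mult)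
  moreover have "(2::real) ^ 4 \<le> exp 1 ^ 4" using exp_ge_add_one_self[of 1] by (intro power_mono) auto
  ultimately show ?thesis by simp
qed

theorem lemma3p8:
  fixes \<rho> \<epsilon> :: real
  assumes "0 < \<rho>" "\<rho> \<le> 1" "0 < \<epsilon>" "\<epsilon> < 1"
  shows "\<exists>C::real. \<forall>(V :: real^'d \<Rightarrow> real) Vc (\<omega> :: real^'d) (x0 :: real^'d) (a::int) (b::int) (lam::real).
     CARD('d) \<ge> 2 \<and> torus_periodic V \<and> (\<exists>x y. V x \<noteq> V y) \<and> analytic_ext \<rho> V Vc \<and>
     a < 0 \<and> 0 < b \<and>
     lam \<ge> exp ((T_V \<rho> V Vc) powr C) \<and>
     (\<forall>n\<in>{a..b} - {0}. \<bar>V (x0 + of_int n *\<^sub>R \<omega>) - V x0\<bar> \<ge> exp (- ((ln lam) powr \<epsilon>)))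
     \<longrightarrow>
     (\<exists>k < nat (b - a + 1). \<exists>\<psi> :: real^'d \<Rightarrow> int \<Rightarrow> real.
        \<forall>x. torus_dist x x0 < exp (- 3 * (ln lam) powr \<epsilon>) \<longrightarrow>
          dir_eigvec lam V \<omega> x a b (dir_E lam V \<omega> x a b k) (\<psi> x) \<and>
          (\<Sum>n=a..b. (\<psi> x n)^2) = 1 \<and>
          \<bar>dir_E lam V \<omega> x a b k / lam - V x\<bar> \<le> 2 / lam \<and>
          (\<forall>n\<in>{a..b}. n \<noteq> 0 \<longrightarrow> \<bar>\<psi> x n\<bar> < exp (- (ln lam) * \<bar>of_int n\<bar> / 2)) \<and>
          \<bar>\<psi> x 0 - 1\<bar> < exp (- (ln lam) / 2) \<and>
          (\<forall>j < nat (b - a + 1). j \<noteq> k \<longrightarrow>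
             \<bar>dir_E lam V \<omega> x a b j - dir_E lam V \<omega> x a b k\<bar> / lam \<ge> exp (- ((ln lam) powr \<epsilon>)) / 8) \<and>
          ((\<forall>n\<in>{a..b} - {0}. V (x0 + of_int n *\<^sub>R \<omega>) - V x0 \<ge> exp (- ((ln lam) powr \<epsilon>))) \<longrightarrow>
             (\<forall>j < nat (b - a + 1). j \<noteq> k \<longrightarrow>
               (dir_E lam V \<omega> x a b j - dir_E lam V \<omega> x a b k) / lam \<ge> exp (- ((ln lam) powr \<epsilon>)) / 8)))"
proof -
  obtain C where C0: "C \<ge> 0" and Cprop: "\<forall>T L. 2 \<le> T \<longrightarrow> T powr C \<le> L \<longrightarrow>
           0 < L \<and> L powr \<epsilon> \<le> L / 2 - 4 \<and> T + ln (16 / \<rho>) \<le> 2 * L powr \<epsilon>"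
    using consts_choice[OF assms] by blast
  show ?thesis
  proof (rule exI[of _ C], intro allI impI)
    fix V :: "real^'d \<Rightarrow> real" and Vc :: "complex^'d \<Rightarrow> complex" and \<omega> x0 :: "real^'d" and a b :: int and lam :: real
    assume H: "CARD('d) \<ge> 2 \<and> torus_periodic V \<and> (\<exists>x y. V x \<noteq> V y) \<and> analytic_ext \<rho> V Vc \<and>
     a < 0 \<and> 0 < b \<and>
     lam \<ge> exp ((T_V \<rho> V Vc) powr C) \<and>
     (\<forall>n\<in>{a..b} - {0}. \<bar>V (x0 + of_int n *\<^sub>R \<omega>) - V x0\<bar> \<ge> exp (- ((ln lam) powr \<epsilon>)))"
    have per: "torus_periodic V" and ext: "analytic_ext \<rho> V Vc" and ab: "a < 0" "0 < b"
      and lamge: "lam \<ge> exp ((T_V \<rho> V Vc) powr C)"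
      and hyp: "\<forall>n\<in>{a..b} - {0}. \<bar>V (x0 + of_int n *\<^sub>R \<omega>) - V x0\<bar> \<ge> exp (- ((ln lam) powr \<epsilon>))"
      using H by auto
    have r: "0 < \<rho>" using assms by simp
    define T where "T = T_V \<rho> V Vc"
    define M where "M = sup_norm_strip \<rho> Vc"
    have T2: "2 \<le> T" and M0: "0 \<le> M" and MT: "M \<le> exp T"
      using M_bounds[OF per ext r] unfolding T_def M_def by auto
    have lampos: "0 < lam" using lamge by (smt (verit) exp_gt_zero)
    define L where "L = ln lam"
    have lamL: "lam = exp L" unfolding L_def using lampos by simp
    have TL: "T powr C \<le> L" unfolding L_def T_def using lamge lampos by (metis exp_le_cancel_iff exp_ln)
    have Lpos: "0 < L" and GL: "L powr \<epsilon> \<le> L / 2 - 4" and TG: "T + ln (16 / \<rho>) \<le> 2 * L powr \<epsilon>"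
      using Cprop T2 TL by auto
    define G where "G = L powr \<epsilon>"
    define g where "g = exp (- G)"
    define \<eta> where "\<eta> = exp (- 3 * G)"
    define \<Lambda> where "\<Lambda> = lam * g"
    define q where "q = exp (- L / 2)"
    have gpos: "0 < g" unfolding g_def by simp
    have \<Lambda>eq: "\<Lambda> = exp (L - G)" unfolding \<Lambda>_def g_def lamL by (simp add: exp_diff exp_minus field_simps)
    have L16: "16 \<le> \<Lambda>"
    proof -
      have e: "exp 4 \<le> exp (L - G)" using GL Lpos unfolding G_def by simp
      show ?thesis using exp4 e \<Lambda>eq by linarith
    qed
    have q0: "0 < q" and q1: "q < 1" unfolding q_def using Lpos by auto
    have Lq: "8 < \<Lambda> * q"
    proof -
      have "\<Lambda> * q = exp ((L - G) + (- L / 2))" unfolding \<Lambda>eq q_def by (rule mult_exp_exp)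
      also have "(L - G) + (- L / 2) = L / 2 - G" by simp
      finally have "\<Lambda> * q = exp (L / 2 - G)" .
      moreover have "exp 4 \<le> exp (L / 2 - G)" using GL unfolding G_def by simp
      ultimately show ?thesis using exp4 by linarith
    qed
    have delta: "2 * M * \<eta> / \<rho> \<le> g / 8"
    proof -
      have "exp (T - 2 * G) \<le> exp (- ln (16 / \<rho>))" using TG unfolding G_def by simp
      also have "\<dots> = \<rho> / 16" using r by (simp add: exp_minus)
      finally have e1: "exp (T - 2 * G) \<le> \<rho> / 16" .
      have "2 * M * \<eta> \<le> 2 * exp T * \<eta>" using MT unfolding \<eta>_def by simp
      also have "\<dots> = 2 * exp (T - 2 * G) * g" unfolding \<eta>_def g_def by (simp add: mult_exp_exp)
      also have "\<dots> \<le> 2 * (\<rho> / 16) * g" using e1 gpos by simp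
      finally have "2 * M * \<eta> \<le> \<rho> * (g / 8)" by simp
      then show ?thesis using r by (simp add: field_simps)
    qed
    define k0 where "k0 = card {n\<in>{a..b} - {0}. V (x0 + of_int n *\<^sub>R \<omega>) < V x0}"
    have k0N: "k0 < nat (b - a + 1)"
    proof -
      have "k0 \<le> card ({a..b} - {0})" unfolding k0_def by (intro card_mono) auto
      also have "\<dots> = nat (b - a + 1) - 1" using ab by (simp add: card_Diff_singleton)
      finally show ?thesis using ab by linarith
    qed
    have main: "\<exists>\<psi>. torus_dist x x0 < exp (- 3 * (ln lam) powr \<epsilon>) \<longrightarrow>
          dir_eigvec lam V \<omega> x a b (dir_E lam V \<omega> x a b k0) \<psi> \<and>
          (\<Sum>n=a..b. (\<psi> n)^2) = 1 \<and>
          \<bar>dir_E lam V \<omega> x a b k0 / lam - V x\<bar> \<le> 2 / lam \<and>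
          (\<forall>n\<in>{a..b}. n \<noteq> 0 \<longrightarrow> \<bar>\<psi> n\<bar> < exp (- (ln lam) * \<bar>of_int n\<bar> / 2)) \<and>
          \<bar>\<psi> 0 - 1\<bar> < exp (- (ln lam) / 2) \<and>
          (\<forall>j < nat (b - a + 1). j \<noteq> k0 \<longrightarrow>
             \<bar>dir_E lam V \<omega> x a b j - dir_E lam V \<omega> x a b k0\<bar> / lam \<ge> exp (- ((ln lam) powr \<epsilon>)) / 8) \<and>
          ((\<forall>n\<in>{a..b} - {0}. V (x0 + of_int n *\<^sub>R \<omega>) - V x0 \<ge> exp (- ((ln lam) powr \<epsilon>))) \<longrightarrow>
             (\<forall>j < nat (b - a + 1). j \<noteq> k0 \<longrightarrow>
               (dir_E lam V \<omega> x a b j - dir_E lam V \<omega> x a b k0) / lam \<ge> exp (- ((ln lam) powr \<epsilon>)) / 8))"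
      for x
    proof (cases "torus_dist x x0 < \<eta>")
      case False
      then show ?thesis unfolding \<eta>_def G_def L_def by auto
    next
      case True
      have lip: "\<bar>V (x + w) - V (x0 + w)\<bar> \<le> g / 8" for w
        using torus_lip[OF per ext r True, of w] delta unfolding M_def by linarith
      define d where "d n = lam * V (x + of_int n *\<^sub>R \<omega>)" for n
      have d0: "d 0 = lam * V x" unfolding d_def by simp
      have hypg: "g \<le> \<bar>V (x0 + of_int n *\<^sub>R \<omega>) - V x0\<bar>" if "n \<in> {a..b}" "n \<noteq> 0" for n
        using hyp that unfolding g_def G_def L_def by auto
      have lipx: "\<bar>V x - V x0\<bar> \<le> g / 8" using lip[of 0] by simp
      have diffclose: "\<bar>(V (x + of_int n *\<^sub>R \<omega>) - V x) - (V (x0 + of_int n *\<^sub>R \<omega>) - V x0)\<bar> \<le> g / 4" for n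
        using lip[of "of_int n *\<^sub>R \<omega>"] lipx by linarith
      have gap: "\<forall>n\<in>{a..b}. n \<noteq> 0 \<longrightarrow> 3 * \<Lambda> / 4 \<le> \<bar>d n - d 0\<bar>"
      proof (intro ballI impI)
        fix n assume n: "n \<in> {a..b}" "n \<noteq> 0"
        have "3 * g / 4 \<le> \<bar>V (x + of_int n *\<^sub>R \<omega>) - V x\<bar>" using hypg[OF n] diffclose[of n] by linarith
        then have "lam * (3 * g / 4) \<le> lam * \<bar>V (x + of_int n *\<^sub>R \<omega>) - V x\<bar>" using lampos by simp
        also have "\<dots> = \<bar>d n - d 0\<bar>"
        proof -
          have "d n - d 0 = lam * (V (x + of_int n *\<^sub>R \<omega>) - V x)" unfolding d0 unfolding d_def by (simp add: algebra_simps)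
          then show ?thesis using lampos by (simp add: abs_mult)
        qed
        finally show "3 * \<Lambda> / 4 \<le> \<bar>d n - d 0\<bar>" unfolding \<Lambda>_def by simp
      qed
      have spx: "\<exists>E \<psi>. jeig d a b E \<psi> \<and> (\<Sum>n=a..b. (\<psi> n)^2) = 1 \<and> \<bar>E - d 0\<bar> \<le> 2 \<and>
     (\<forall>n\<in>{a..b}. n \<noteq> 0 \<longrightarrow> \<bar>\<psi> n\<bar> < q ^ nat \<bar>n\<bar>) \<and> \<bar>\<psi> 0 - 1\<bar> < q \<and>
     card {n\<in>{a..b}. d n < d 0 - \<Lambda>/4} < nat (b - a + 1) \<and>
     sorted_list_of_set {E. \<exists>\<psi>. jeig d a b E \<psi>} ! card {n\<in>{a..b}. d n < d 0 - \<Lambda>/4} = E \<and>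
     card {E. \<exists>\<psi>. jeig d a b E \<psi>} = nat (b - a + 1) \<and>
     (\<forall>j < nat (b - a + 1). j \<noteq> card {n\<in>{a..b}. d n < d 0 - \<Lambda>/4} \<longrightarrow>
         \<Lambda>/8 \<le> \<bar>sorted_list_of_set {E. \<exists>\<psi>. jeig d a b E \<psi>} ! j - E\<bar>) \<and>
     (card {n\<in>{a..b}. d n < d 0 - \<Lambda>/4} = 0 \<longrightarrow>
        (\<forall>j < nat (b - a + 1). j \<noteq> 0 \<longrightarrow> \<Lambda>/8 \<le> sorted_list_of_set {E. \<exists>\<psi>. jeig d a b E \<psi>} ! j - E))"
        by (rule spectral[OF ab L16 q0 q1 Lq gap])
      then obtain E \<psi> where sp0: "jeig d a b E \<psi> \<and> (\<Sum>n=a..b. (\<psi> n)^2) = 1 \<and> \<bar>E - d 0\<bar> \<le> 2 \<and>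
     (\<forall>n\<in>{a..b}. n \<noteq> 0 \<longrightarrow> \<bar>\<psi> n\<bar> < q ^ nat \<bar>n\<bar>) \<and> \<bar>\<psi> 0 - 1\<bar> < q \<and>
     card {n\<in>{a..b}. d n < d 0 - \<Lambda>/4} < nat (b - a + 1) \<and>
     sorted_list_of_set {E. \<exists>\<psi>. jeig d a b E \<psi>} ! card {n\<in>{a..b}. d n < d 0 - \<Lambda>/4} = E \<and>
     card {E. \<exists>\<psi>. jeig d a b E \<psi>} = nat (b - a + 1) \<and>
     (\<forall>j < nat (b - a + 1). j \<noteq> card {n\<in>{a..b}. d n < d 0 - \<Lambda>/4} \<longrightarrow>
         \<Lambda>/8 \<le> \<bar>sorted_list_of_set {E. \<exists>\<psi>. jeig d a b E \<psi>} ! j - E\<bar>) \<and>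
     (card {n\<in>{a..b}. d n < d 0 - \<Lambda>/4} = 0 \<longrightarrow>
        (\<forall>j < nat (b - a + 1). j \<noteq> 0 \<longrightarrow> \<Lambda>/8 \<le> sorted_list_of_set {E. \<exists>\<psi>. jeig d a b E \<psi>} ! j - E))"
        by (elim exE)
      note sp = sp0[THEN conjunct1] sp0[THEN conjunct2, THEN conjunct1] sp0[THEN conjunct2, THEN conjunct2, THEN conjunct1]
        sp0[THEN conjunct2, THEN conjunct2, THEN conjunct2, THEN conjunct1]
        sp0[THEN conjunct2, THEN conjunct2, THEN conjunct2, THEN conjunct2, THEN conjunct1]
        sp0[THEN conjunct2, THEN conjunct2, THEN conjunct2, THEN conjunct2, THEN conjunct2, THEN conjunct2, THEN conjunct1]
        sp0[THEN conjunct2, THEN conjunct2, THEN conjunct2, THEN conjunct2, THEN conjunct2, THEN conjunct2, THEN conjunct2, THEN conjunct2, THEN conjunct1]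
        sp0[THEN conjunct2, THEN conjunct2, THEN conjunct2, THEN conjunct2, THEN conjunct2, THEN conjunct2, THEN conjunct2, THEN conjunct2, THEN conjunct2]
      have kk: "card {n\<in>{a..b}. d n < d 0 - \<Lambda>/4} = k0"
      proof -
        have "{n\<in>{a..b}. d n < d 0 - \<Lambda>/4} = {n\<in>{a..b} - {0}. V (x0 + of_int n *\<^sub>R \<omega>) < V x0}"
        proof (intro set_eqI iffI)
          fix n assume n: "n \<in> {n\<in>{a..b}. d n < d 0 - \<Lambda>/4}"
          then have "lam * V (x + of_int n *\<^sub>R \<omega>) < lam * V x - lam * g / 4"
            unfolding d_def \<Lambda>_def by simp
          then have "lam * V (x + of_int n *\<^sub>R \<omega>) < lam * (V x - g / 4)"
            by (simp add: right_diff_distrib)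
          then have "V (x + of_int n *\<^sub>R \<omega>) < V x - g / 4" using lampos
            by (simp add: mult_less_cancel_left_pos)
          then have lt: "V (x + of_int n *\<^sub>R \<omega>) - V x < - g / 4" by simp
          then have "n \<noteq> 0" using gpos by auto
          moreover have "V (x0 + of_int n *\<^sub>R \<omega>) < V x0"
          proof (rule ccontr)
            assume "\<not> V (x0 + of_int n *\<^sub>R \<omega>) < V x0"
            then show False using diffclose[of n] lt gpos by linarith
          qed
          ultimately show "n \<in> {n\<in>{a..b} - {0}. V (x0 + of_int n *\<^sub>R \<omega>) < V x0}" using n by auto
        next
          fix n assume n: "n \<in> {n\<in>{a..b} - {0}. V (x0 + of_int n *\<^sub>R \<omega>) < V x0}"
          then have "g \<le> \<bar>V (x0 + of_int n *\<^sub>R \<omega>) - V x0\<bar>" using hypg[of n] n by blast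
          moreover have "V (x0 + of_int n *\<^sub>R \<omega>) < V x0" using n by auto
          ultimately have "V (x0 + of_int n *\<^sub>R \<omega>) - V x0 \<le> - g" by linarith
          then have lt: "V (x + of_int n *\<^sub>R \<omega>) - V x < - g / 4" using diffclose[of n] gpos by linarith
          then have "lam * (V (x + of_int n *\<^sub>R \<omega>) - V x) < lam * (- g / 4)" using lampos by (simp only: mult_less_cancel_left_pos)
          then have "d n < d 0 - \<Lambda>/4" unfolding d_def \<Lambda>_def by (simp add: algebra_simps)
          then show "n \<in> {n\<in>{a..b}. d n < d 0 - \<Lambda>/4}" using n by auto
        qed
        then show ?thesis unfolding k0_def by simp
      qed
      have eigs: "dir_eigs lam V \<omega> x a b = {E. \<exists>\<psi>. jeig d a b E \<psi>}"
        unfolding dir_eigs_def dir_eigvec_def jeig_def d_def by simp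
      have dE: "dir_E lam V \<omega> x a b j = sorted_list_of_set {E. \<exists>\<psi>. jeig d a b E \<psi>} ! j" for j
        unfolding dir_E_def eigs by simp
      have Ek: "dir_E lam V \<omega> x a b k0 = E" using sp(6) kk dE by simp
      have ev: "dir_eigvec lam V \<omega> x a b E \<psi>" using sp(1) unfolding dir_eigvec_def jeig_def d_def by simp
      have c1: "\<bar>E / lam - V x\<bar> \<le> 2 / lam"
      proof -
        have "\<bar>E / lam - V x\<bar> = \<bar>E - d 0\<bar> / lam" unfolding d0 using lampos
          by (simp add: field_simps abs_divide[symmetric])
        then show ?thesis using sp(3) lampos by (simp add: divide_right_mono)
      qed
      have c2: "\<forall>n\<in>{a..b}. n \<noteq> 0 \<longrightarrow> \<bar>\<psi> n\<bar> < exp (- (ln lam) * \<bar>of_int n\<bar> / 2)"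
      proof (intro ballI impI)
        fix n assume "n \<in> {a..b}" "n \<noteq> 0"
        then have "\<bar>\<psi> n\<bar> < q ^ nat \<bar>n\<bar>" using sp(4) by simp
        also have "q ^ nat \<bar>n\<bar> = exp (real (nat \<bar>n\<bar>) * (- L / 2))" unfolding q_def by (rule exp_of_nat_mult[symmetric])
        also have "\<dots> = exp (- (ln lam) * \<bar>of_int n\<bar> / 2)" unfolding L_def by simp
        finally show "\<bar>\<psi> n\<bar> < exp (- (ln lam) * \<bar>of_int n\<bar> / 2)" .
      qed
      have c3: "\<bar>\<psi> 0 - 1\<bar> < exp (- (ln lam) / 2)" using sp(5) unfolding q_def L_def by simp
      have c4: "\<forall>j < nat (b - a + 1). j \<noteq> k0 \<longrightarrow>
             \<bar>dir_E lam V \<omega> x a b j - dir_E lam V \<omega> x a b k0\<bar> / lam \<ge> exp (- ((ln lam) powr \<epsilon>)) / 8"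
      proof (intro allI impI)
        fix j assume j: "j < nat (b - a + 1)" "j \<noteq> k0"
        then have "\<Lambda>/8 \<le> \<bar>dir_E lam V \<omega> x a b j - dir_E lam V \<omega> x a b k0\<bar>" using sp(7) kk dE Ek by simp
        then have "\<Lambda>/8 / lam \<le> \<bar>dir_E lam V \<omega> x a b j - dir_E lam V \<omega> x a b k0\<bar> / lam"
          using lampos by (intro divide_right_mono) auto
        moreover have "\<Lambda>/8 / lam = exp (- ((ln lam) powr \<epsilon>)) / 8" unfolding \<Lambda>_def g_def G_def L_def using lampos by simp
        ultimately show "\<bar>dir_E lam V \<omega> x a b j - dir_E lam V \<omega> x a b k0\<bar> / lam \<ge> exp (- ((ln lam) powr \<epsilon>)) / 8" by metis
      qed
      have c5: "(\<forall>n\<in>{a..b} - {0}. V (x0 + of_int n *\<^sub>R \<omega>) - V x0 \<ge> exp (- ((ln lam) powr \<epsilon>))) \<longrightarrow>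
             (\<forall>j < nat (b - a + 1). j \<noteq> k0 \<longrightarrow>
               (dir_E lam V \<omega> x a b j - dir_E lam V \<omega> x a b k0) / lam \<ge> exp (- ((ln lam) powr \<epsilon>)) / 8)"
      proof (intro impI allI)
        fix j assume pos: "\<forall>n\<in>{a..b} - {0}. V (x0 + of_int n *\<^sub>R \<omega>) - V x0 \<ge> exp (- ((ln lam) powr \<epsilon>))"
          and j: "j < nat (b - a + 1)" "j \<noteq> k0"
        have "k0 = 0"
        proof -
          have e: "{n\<in>{a..b} - {0}. V (x0 + of_int n *\<^sub>R \<omega>) < V x0} = {}"
          proof (intro equalityI subsetI)
            fix n assume "n \<in> {n\<in>{a..b} - {0}. V (x0 + of_int n *\<^sub>R \<omega>) < V x0}"
            then show "n \<in> {}" using pos by (smt (verit, best) exp_gt_zero mem_Collect_eq)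
          qed auto
          show ?thesis unfolding k0_def e by simp
        qed
        then have "\<Lambda>/8 \<le> dir_E lam V \<omega> x a b j - dir_E lam V \<omega> x a b k0" using sp(8) kk dE Ek j by simp
        then have "\<Lambda>/8 / lam \<le> (dir_E lam V \<omega> x a b j - dir_E lam V \<omega> x a b k0) / lam"
          using lampos by (intro divide_right_mono) auto
        moreover have "\<Lambda>/8 / lam = exp (- ((ln lam) powr \<epsilon>)) / 8" unfolding \<Lambda>_def g_def G_def L_def using lampos by simp
        ultimately show "(dir_E lam V \<omega> x a b j - dir_E lam V \<omega> x a b k0) / lam \<ge> exp (- ((ln lam) powr \<epsilon>)) / 8" by metis
      qed
      show ?thesis
        by (rule exI[of _ \<psi>]) (use ev sp(2) c1 c2 c3 c4 c5 Ek in simp)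
    qed
    show "\<exists>k < nat (b - a + 1). \<exists>\<psi> :: real^'d \<Rightarrow> int \<Rightarrow> real.
        \<forall>x. torus_dist x x0 < exp (- 3 * (ln lam) powr \<epsilon>) \<longrightarrow>
          dir_eigvec lam V \<omega> x a b (dir_E lam V \<omega> x a b k) (\<psi> x) \<and>
          (\<Sum>n=a..b. (\<psi> x n)^2) = 1 \<and>
          \<bar>dir_E lam V \<omega> x a b k / lam - V x\<bar> \<le> 2 / lam \<and>
          (\<forall>n\<in>{a..b}. n \<noteq> 0 \<longrightarrow> \<bar>\<psi> x n\<bar> < exp (- (ln lam) * \<bar>of_int n\<bar> / 2)) \<and>
          \<bar>\<psi> x 0 - 1\<bar> < exp (- (ln lam) / 2) \<and>
          (\<forall>j < nat (b - a + 1). j \<noteq> k \<longrightarrow>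
             \<bar>dir_E lam V \<omega> x a b j - dir_E lam V \<omega> x a b k\<bar> / lam \<ge> exp (- ((ln lam) powr \<epsilon>)) / 8) \<and>
          ((\<forall>n\<in>{a..b} - {0}. V (x0 + of_int n *\<^sub>R \<omega>) - V x0 \<ge> exp (- ((ln lam) powr \<epsilon>))) \<longrightarrow>
             (\<forall>j < nat (b - a + 1). j \<noteq> k \<longrightarrow>
               (dir_E lam V \<omega> x a b j - dir_E lam V \<omega> x a b k) / lam \<ge> exp (- ((ln lam) powr \<epsilon>)) / 8))"
      by (rule exI[of _ k0], rule conjI[OF k0N], rule choice[OF allI[OF main]])
  qed
qed

end
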